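(* Let $\tau>0$ and let $\psi$ satisfy Assumption $(\mathrm{A}_\ell)$ with some $\ell\ge 1$. Suppose the initial history satisfies $(\eta_s,v_s)\in\mathcal C([-\tau,0]\times\overline\Omega_0)$ with $\eta_0(x)=x$. Then there exists a unique global-in-time solution $\eta\in\mathcal C^1([0,\infty);\mathcal C(\overline\Omega_0))$, $v\in\mathcal C([0,\infty)\times\overline\Omega_0)$ of the Lagrangian system (L), and it satisfies \[ \|v_t\|_{L^\infty([0,\infty)\times\Omega_0)}\le \max_{s\in[-\tau,0]}\|v_s\|_{L^\infty(\Omega_0)}. \]
   Context: Let $d\in\mathbb N$, let $\tau\ge0$ be a fixed delay, let $\Omega_0\subset\mathbb R^d$ be a bounded open set, and let $\rho_0:\Omega_0\to[0,\infty)$ be integrable with $\int_{\Omega_0}\rho_0=1$. Assumption $(\mathrm{A}_\ell)$ on the influence function $\psi:\mathbb R^d\to(0,\infty)$: $\psi$ is continuous and radially symmetric, $\psi(x)=\widetilde\psi(|x|)$, where $\widetilde\psi:[0,\infty)\to(0,\infty)$ is nonincreasing, positive, bounded, with $\widetilde\psi(0)=1$ (so $0<\psi\le1$). Moreover, if $\ell\ge1$, $\psi$ is $\ell$ times continuously differentiable on $\mathbb R^d$ with uniformly bounded derivatives up to order $\ell$. Lagrangian system (L): for $x\in\Omega_0$ and $t>0$, \[ \frac{d\eta_t(x)}{dt}=v_t(x),\qquad \frac{dv_t(x)}{dt}=\frac{\int_{\Omega_0}\psi(\eta_t(x)-\eta_{t-\tau}(y))\rho_0(y)v_{t-\tau}(y)\,dy}{\int_{\Omega_0}\psi(\eta_t(x)-\eta_{t-\tau}(y))\rho_0(y)\,dy}-v_t(x),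 \] with prescribed initial history $(\eta_s,v_s)$ for $s\in[-\tau,0]$, $x\in\Omega_0$, where $\eta_0(x)=x$. *)

theory Defs
  imports "HOL-Analysis.Analysis"
begin

text \<open>The theorem assumes (A_l) for some l >= 1; since (A_l) implies (A_1) and
  (A_1) is itself one instance, this is equivalent to assuming (A_1).\<close>
definition assumption_A1 :: "('a::euclidean_space \<Rightarrow> real) \<Rightarrow> (real \<Rightarrow> real) \<Rightarrow> bool" where
  "assumption_A1 \<psi> \<psi>t \<longleftrightarrow>
     continuous_on UNIV \<psi> \<and>
     (\<forall>x. \<psi> x = \<psi>t (norm x)) \<and>
     (\<forall>r\<in>{0..}. \<forall>s\<in>{0..}. r \<le> s \<longrightarrow> \<psi>t s \<le> \<psi>t r) \<and>
     (\<forall>r\<ge>0. \<psi>t r > 0) \<and>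
     bounded (\<psi>t ` {0..}) \<and>
     \<psi>t 0 = 1 \<and>
     (\<exists>\<psi>' :: 'a \<Rightarrow> 'a \<Rightarrow>\<^sub>L real.
        (\<forall>x. (\<psi> has_derivative blinfun_apply (\<psi>' x)) (at x)) \<and>
        continuous_on UNIV \<psi>' \<and> bounded (range \<psi>'))"

definition align_rhs ::
  "real \<Rightarrow> 'a::euclidean_space set \<Rightarrow> ('a \<Rightarrow> real) \<Rightarrow> ('a \<Rightarrow> real)
    \<Rightarrow> (real \<Rightarrow> 'a \<Rightarrow> 'a) \<Rightarrow> (real \<Rightarrow> 'a \<Rightarrow> 'a) \<Rightarrow> real \<Rightarrow> 'a \<Rightarrow> 'a" where
  "align_rhs \<tau> \<Omega> \<rho> \<psi> \<eta> v t x =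
     (1 / integral \<Omega> (\<lambda>y. \<psi> (\<eta> t x - \<eta> (t - \<tau>) y) * \<rho> y)) *\<^sub>R
       integral \<Omega> (\<lambda>y. (\<psi> (\<eta> t x - \<eta> (t - \<tau>) y) * \<rho> y) *\<^sub>R v (t - \<tau>) y)
     - v t x"

text \<open>(eta, v) is a solution of (L) on [0,oo) with initial history (etah, vh):
  it coincides with the history on [-tau,0] x closure Omega;
  eta is in C^1([0,oo); C(closure Omega)) with derivative v (differentiability
  in the sup norm over closure Omega, one-sided at t = 0);
  v is in C([0,oo) x closure Omega); and the velocity equation holds pointwise
  for x in Omega and t > 0.\<close>
definition is_solution_L ::
  "real \<Rightarrow> 'a::euclidean_space set \<Rightarrow> ('a \<Rightarrow> real) \<Rightarrow> ('a \<Rightarrow> real)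
    \<Rightarrow> (real \<Rightarrow> 'a \<Rightarrow> 'a) \<Rightarrow> (real \<Rightarrow> 'a \<Rightarrow> 'a)
    \<Rightarrow> (real \<Rightarrow> 'a \<Rightarrow> 'a) \<Rightarrow> (real \<Rightarrow> 'a \<Rightarrow> 'a) \<Rightarrow> bool" where
  "is_solution_L \<tau> \<Omega> \<rho> \<psi> \<eta>h vh \<eta> v \<longleftrightarrow>
     (\<forall>s\<in>{-\<tau>..0}. \<forall>x\<in>closure \<Omega>. \<eta> s x = \<eta>h s x \<and> v s x = vh s x) \<and>
     continuous_on ({0..} \<times> closure \<Omega>) (\<lambda>(t, x). \<eta> t x) \<and>
     continuous_on ({0..} \<times> closure \<Omega>) (\<lambda>(t, x). v t x) \<and>
     (\<forall>t\<ge>0. \<forall>e>0. \<exists>\<delta>>0. \<forall>s\<ge>0. \<bar>s - t\<bar> < \<delta> \<longrightarrow>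
        (\<forall>x\<in>closure \<Omega>. norm (\<eta> s x - \<eta> t x - (s - t) *\<^sub>R v t x) \<le> e * \<bar>s - t\<bar>)) \<and>
     (\<forall>x\<in>\<Omega>. \<forall>t>0.
        ((\<lambda>s. v s x) has_vector_derivative align_rhs \<tau> \<Omega> \<rho> \<psi> \<eta> v t x) (at t))"

end

theory Submission
  imports Defs
begin

lemma A1_facts:
  fixes \<psi> :: "'a::euclidean_space \<Rightarrow> real"
  assumes "assumption_A1 \<psi> \<psi>t"
  shows A1_pos: "\<And>x. \<psi> x > 0" and A1_le1: "\<And>x. \<psi> x \<le> 1"
    and A1_lower: "\<And>x r. norm x \<le> r \<Longrightarrow> \<psi>t r \<le> \<psi> x"
    and A1_lowpos: "\<And>r. r \<ge> 0 \<Longrightarrow> \<psi>t r > 0"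
    and A1_cont: "continuous_on UNIV \<psi>"
proof -
  note a = assms[unfolded assumption_A1_def]
  show "\<psi> x > 0" for x using a by auto
  show "\<psi> x \<le> 1" for x
  proof -
    have m: "\<forall>r\<in>{0..}. \<forall>s\<in>{0..}. r \<le> s \<longrightarrow> \<psi>t s \<le> \<psi>t r" using a by blast
    have "\<psi>t (norm x) \<le> \<psi>t 0" using m[rule_format, of 0 "norm x"] by simp
    then show ?thesis using a by metis
  qed
  show "norm x \<le> r \<Longrightarrow> \<psi>t r \<le> \<psi> x" for x r
  proof -
    assume "norm x \<le> r"
    moreover have "r \<ge> 0" using calculation norm_ge_zero order_trans by blast
    moreover have m: "\<forall>r\<in>{0..}. \<forall>s\<in>{0..}. r \<le> s \<longrightarrow> \<psi>t s \<le> \<psi>t r" using a by blast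
    ultimately have "\<psi>t r \<le> \<psi>t (norm x)" using m[rule_format, of "norm x" r] by simp
    then show ?thesis using a by auto
  qed
  show "r \<ge> 0 \<Longrightarrow> \<psi>t r > 0" for r using a by auto
  show "continuous_on UNIV \<psi>" using a by auto
qed

lemma A1_lip:
  fixes \<psi> :: "'a::euclidean_space \<Rightarrow> real"
  assumes "assumption_A1 \<psi> \<psi>t"
  obtains L where "L > 0" "\<And>x y. \<bar>\<psi> x - \<psi> y\<bar> \<le> L * norm (x - y)"
proof -
  obtain \<psi>' :: "'a \<Rightarrow> 'a \<Rightarrow>\<^sub>L real" where d: "\<And>x. (\<psi> has_derivative blinfun_apply (\<psi>' x)) (at x)"
    and b: "bounded (range \<psi>')"
    using assms unfolding assumption_A1_def by blast
  obtain B where B: "B > 0" "\<And>x. norm (\<psi>' x) \<le> B"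
    using b unfolding bounded_pos by blast
  have "norm (\<psi> x - \<psi> y) \<le> B * norm (x - y)" for x y
    by (rule differentiable_bound[of UNIV _ "\<lambda>x. blinfun_apply (\<psi>' x)"])
       (use d B in \<open>auto simp: norm_blinfun.rep_eq\<close>)
  then show ?thesis using that[of B] B by auto
qed



lemma bilinear_flip_scaleR: "bilinear (\<lambda>(v::'b::euclidean_space) (a::real). a *\<^sub>R v)"
  unfolding bilinear_def by (auto intro!: linearI simp: scaleR_add_left scaleR_add_right)

lemma open_sets_lebesgue: "open S \<Longrightarrow> S \<in> sets lebesgue"
  by (metis borel_open sets_completionI_sets sets_lborel)

locale setting =
  fixes \<Omega> :: "'a::euclidean_space set" and \<rho> :: "'a \<Rightarrow> real"
    and \<psi> :: "'a \<Rightarrow> real" and \<psi>t :: "real \<Rightarrow> real"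
  assumes bnd: "bounded \<Omega>" and opn: "open \<Omega>"
    and rho_nn: "\<And>x. x \<in> \<Omega> \<Longrightarrow> \<rho> x \<ge> 0"
    and rho_int: "\<rho> integrable_on \<Omega>"
    and rho_mass: "integral \<Omega> \<rho> = 1"
    and psiA: "assumption_A1 \<psi> \<psi>t"
begin

definition Lpsi where "Lpsi = (SOME L. L > 0 \<and> (\<forall>x y. \<bar>\<psi> x - \<psi> y\<bar> \<le> L * norm (x - y)))"

lemma Lpsi: "Lpsi > 0" "\<bar>\<psi> x - \<psi> y\<bar> \<le> Lpsi * norm (x - y)"
proof -
  obtain L where "L > 0" "\<And>x y. \<bar>\<psi> x - \<psi> y\<bar> \<le> L * norm (x - y)" using A1_lip[OF psiA] by blast
  then have "\<exists>L. L > 0 \<and> (\<forall>x y. \<bar>\<psi> x - \<psi> y\<bar> \<le> L * norm (x - y))" by blast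
  from someI_ex[OF this] show "Lpsi > 0" "\<bar>\<psi> x - \<psi> y\<bar> \<le> Lpsi * norm (x - y)"
    unfolding Lpsi_def by auto
qed

lemma psi_pos: "\<psi> x > 0" and psi_le1: "\<psi> x \<le> 1"
  using A1_pos[OF psiA] A1_le1[OF psiA] by auto

lemma psi_cont: "continuous_on S \<psi>"
  using A1_cont[OF psiA] continuous_on_subset by blast

lemma Omega_leb: "\<Omega> \<in> sets lebesgue" using opn open_sets_lebesgue by blast

lemma rho_abs: "\<rho> absolutely_integrable_on \<Omega>"
  using nonnegative_absolutely_integrable_1[OF rho_int] rho_nn by blast

definition W :: "'a \<Rightarrow> ('a \<Rightarrow> 'a) \<Rightarrow> 'a \<Rightarrow> real" where
  "W p E y = \<psi> (p - E y) * \<rho> y"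
definition D :: "'a \<Rightarrow> ('a \<Rightarrow> 'a) \<Rightarrow> real" where "D p E = integral \<Omega> (W p E)"
definition N :: "'a \<Rightarrow> ('a \<Rightarrow> 'a) \<Rightarrow> ('a \<Rightarrow> 'a) \<Rightarrow> 'a" where "N p E V = integral \<Omega> (\<lambda>y. W p E y *\<^sub>R V y)"
definition Gf :: "'a \<Rightarrow> ('a \<Rightarrow> 'a) \<Rightarrow> ('a \<Rightarrow> 'a) \<Rightarrow> 'a" where
  "Gf p E V = (1 / D p E) *\<^sub>R N p E V"

lemma W_nn: "y \<in> \<Omega> \<Longrightarrow> W p E y \<ge> 0"
  unfolding W_def using psi_pos rho_nn by (simp add: less_imp_le)

lemma W_le: "y \<in> \<Omega> \<Longrightarrow> W p E y \<le> \<rho> y"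
  unfolding W_def using psi_le1 rho_nn psi_pos by (simp add: mult_left_le_one_le less_imp_le)

lemma W_abs:
  assumes "continuous_on \<Omega> E"
  shows "W p E absolutely_integrable_on \<Omega>"
proof -
  have c: "continuous_on \<Omega> (\<lambda>y. \<psi> (p - E y))"
    by (intro continuous_on_compose2[OF psi_cont[of UNIV]] continuous_intros assms) auto
  have "(\<lambda>y. (*) (\<psi> (p - E y)) (\<rho> y)) absolutely_integrable_on \<Omega>"
  proof (rule absolutely_integrable_bounded_measurable_product[OF bilinear_times])
    show "(\<lambda>y. \<psi> (p - E y)) \<in> borel_measurable (lebesgue_on \<Omega>)"
      using continuous_imp_measurable_on_sets_lebesgue[OF c Omega_leb] .
    show "bounded ((\<lambda>y. \<psi> (p - E y)) ` \<Omega>)"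
      unfolding bounded_iff using psi_pos psi_le1
      by (intro exI[of _ 1]) (auto simp: less_imp_le)
  qed (use Omega_leb rho_abs in auto)
  then show ?thesis unfolding W_def by simp
qed

lemma W_int: "continuous_on \<Omega> E \<Longrightarrow> W p E integrable_on \<Omega>"
  using W_abs absolutely_integrable_on_def by blast

lemma WV_int:
  assumes "continuous_on \<Omega> E" "continuous_on \<Omega> V" "\<And>y. y \<in> \<Omega> \<Longrightarrow> norm (V y) \<le> M"
  shows "(\<lambda>y. W p E y *\<^sub>R (V y :: 'a)) integrable_on \<Omega>"
proof -
  have "(\<lambda>y. (\<lambda>v a. a *\<^sub>R v) (V y) (W p E y)) absolutely_integrable_on \<Omega>"
  proof (rule absolutely_integrable_bounded_measurable_product[OF bilinear_flip_scaleR])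
    show "V \<in> borel_measurable (lebesgue_on \<Omega>)"
      using continuous_imp_measurable_on_sets_lebesgue[OF assms(2) Omega_leb] .
    show "bounded (V ` \<Omega>)" unfolding bounded_iff using assms(3) by auto
  qed (use Omega_leb W_abs[OF assms(1)] in auto)
  then show ?thesis using absolutely_integrable_on_def by auto
qed

lemma D_lower:
  assumes "continuous_on \<Omega> E" "\<And>y. y \<in> \<Omega> \<Longrightarrow> norm (E y) \<le> B" "norm p \<le> B"
  shows "D p E \<ge> \<psi>t (2 * B)"
proof -
  have "integral \<Omega> (\<lambda>y. \<psi>t (2*B) * \<rho> y) \<le> integral \<Omega> (W p E)"
  proof (rule integral_le)
    show "(\<lambda>y. \<psi>t (2*B) * \<rho> y) integrable_on \<Omega>" using rho_int by (rule integrable_on_mult_right)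
    show "W p E integrable_on \<Omega>" using W_int[OF assms(1)] .
    fix y assume y: "y \<in> \<Omega>"
    have "norm (p - E y) \<le> 2 * B" using assms(2)[OF y] assms(3) norm_triangle_ineq4[of p "E y"] by linarith
    then have "\<psi>t (2*B) \<le> \<psi> (p - E y)" using A1_lower[OF psiA] by blast
    then show "\<psi>t (2*B) * \<rho> y \<le> W p E y" unfolding W_def using rho_nn[OF y] by (simp add: mult_right_mono)
  qed
  then show ?thesis using rho_mass unfolding D_def by simp
qed

lemma D_pos:
  assumes "continuous_on \<Omega> E" "\<And>y. y \<in> \<Omega> \<Longrightarrow> norm (E y) \<le> B" "norm p \<le> B"
  shows "D p E > 0"
proof -
  have "B \<ge> 0" using assms(3) norm_ge_zero order_trans by blast
  then have "\<psi>t (2*B) > 0" using A1_lowpos[OF psiA] by simp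
  then show ?thesis using D_lower[OF assms] by simp
qed

lemma N_bound:
  assumes "continuous_on \<Omega> E" "continuous_on \<Omega> V" "\<And>y. y \<in> \<Omega> \<Longrightarrow> norm (V y) \<le> M"
  shows "norm (N p E V) \<le> M * D p E"
proof -
  have "norm (N p E V) \<le> integral \<Omega> (\<lambda>y. M * W p E y)"
    unfolding N_def
  proof (rule integral_norm_bound_integral)
    show "(\<lambda>y. W p E y *\<^sub>R V y) integrable_on \<Omega>" using WV_int[OF assms] .
    show "(\<lambda>y. M * W p E y) integrable_on \<Omega>" using W_int[OF assms(1)] by (rule integrable_on_mult_right)
    fix y assume y: "y \<in> \<Omega>"
    show "norm (W p E y *\<^sub>R V y) \<le> M * W p E y"
      using mult_right_mono[OF assms(3)[OF y] W_nn[OF y, of p E]] W_nn[OF y, of p E] by (simp add: mult.commute)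
  qed
  then show ?thesis unfolding D_def by simp
qed

lemma Gf_bound:
  assumes "continuous_on \<Omega> E" "\<And>y. y \<in> \<Omega> \<Longrightarrow> norm (E y) \<le> B" "norm p \<le> B"
    "continuous_on \<Omega> V" "\<And>y. y \<in> \<Omega> \<Longrightarrow> norm (V y) \<le> M"
  shows "norm (Gf p E V) \<le> M"
proof -
  have "D p E > 0" using D_pos[OF assms(1-3)] .
  moreover have "norm (N p E V) \<le> M * D p E" using N_bound[OF assms(1,4,5)] .
  ultimately show ?thesis unfolding Gf_def by (simp add: divide_simps mult.commute)
qed

end


context setting begin

lemma Omega_ne: "\<Omega> \<noteq> {}"
  using rho_mass by auto

definition Lc :: "real \<Rightarrow> real \<Rightarrow> real" where
  "Lc B M = (2 * M * Lpsi + 1) / \<psi>t (2 * B)"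

lemma Lc_pos: "B \<ge> 0 \<Longrightarrow> M \<ge> 0 \<Longrightarrow> Lc B M > 0"
  unfolding Lc_def using Lpsi(1) A1_lowpos[OF psiA, of "2*B"]
  by (intro divide_pos_pos) (auto intro!: add_nonneg_pos mult_nonneg_nonneg)

lemma Gf_lip:
  assumes cE: "continuous_on \<Omega> E" and cE': "continuous_on \<Omega> E'"
    and cV: "continuous_on \<Omega> V" and cV': "continuous_on \<Omega> V'"
    and bE: "\<And>y. y \<in> \<Omega> \<Longrightarrow> norm (E y) \<le> B" and bE': "\<And>y. y \<in> \<Omega> \<Longrightarrow> norm (E' y) \<le> B"
    and bV: "\<And>y. y \<in> \<Omega> \<Longrightarrow> norm (V y) \<le> M" and bV': "\<And>y. y \<in> \<Omega> \<Longrightarrow> norm (V' y) \<le> M"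
    and bp: "norm p \<le> B" and bp': "norm p' \<le> B"
    and dE: "\<And>y. y \<in> \<Omega> \<Longrightarrow> norm (E y - E' y) \<le> dE"
    and dV: "\<And>y. y \<in> \<Omega> \<Longrightarrow> norm (V y - V' y) \<le> dV"
  shows "norm (Gf p E V - Gf p' E' V') \<le> Lc B M * (norm (p - p') + dE + dV)"
proof -
  obtain y0 where y0: "y0 \<in> \<Omega>" using Omega_ne by blast
  have M0: "M \<ge> 0" using bV[OF y0] norm_ge_zero order_trans by blast
  have B0: "B \<ge> 0" using bp norm_ge_zero order_trans by blast
  have dE0: "dE \<ge> 0" using dE[OF y0] norm_ge_zero order_trans by blast
  have dV0: "dV \<ge> 0" using dV[OF y0] norm_ge_zero order_trans by blast
  define \<delta> where "\<delta> = norm (p - p') + dE"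
  have \<delta>0: "\<delta> \<ge> 0" unfolding \<delta>_def using dE0 by simp
  define c where "c = \<psi>t (2 * B)"
  have c0: "c > 0" unfolding c_def using A1_lowpos[OF psiA, of "2*B"] B0 by simp
  have D: "D p E \<ge> c" "D p' E' \<ge> c" unfolding c_def
    using D_lower[OF cE bE bp] D_lower[OF cE' bE' bp'] by auto
  have h1: "\<bar>W p E y - W p' E' y\<bar> \<le> Lpsi * \<delta> * \<rho> y" if y: "y \<in> \<Omega>" for y
  proof -
    have "\<bar>\<psi> (p - E y) - \<psi> (p' - E' y)\<bar> \<le> Lpsi * norm ((p - E y) - (p' - E' y))" by (rule Lpsi(2))
    also have "norm ((p - E y) - (p' - E' y)) \<le> norm (p - p') + norm (E y - E' y)"
    proof -
      have ee: "(p - E y) - (p' - E' y) = (p - p') - (E y - E' y)" by (simp add: algebra_simps)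
      show ?thesis by (subst ee) (rule norm_triangle_ineq4)
    qed
    then have "norm ((p - E y) - (p' - E' y)) \<le> \<delta>" unfolding \<delta>_def using dE[OF y] by linarith
    then have "Lpsi * norm ((p - E y) - (p' - E' y)) \<le> Lpsi * \<delta>" using Lpsi(1) by simp
    finally have "\<bar>\<psi> (p - E y) - \<psi> (p' - E' y)\<bar> \<le> Lpsi * \<delta>" .
    then have "\<bar>\<psi> (p - E y) - \<psi> (p' - E' y)\<bar> * \<rho> y \<le> Lpsi * \<delta> * \<rho> y"
      using rho_nn[OF y] by (simp add: mult_right_mono)
    moreover have "\<bar>W p E y - W p' E' y\<bar> = \<bar>\<psi> (p - E y) - \<psi> (p' - E' y)\<bar> * \<rho> y"
      unfolding W_def using rho_nn[OF y] by (simp add: abs_mult left_diff_distrib[symmetric])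
    ultimately show ?thesis by simp
  qed
  have h2: "\<bar>D p E - D p' E'\<bar> \<le> Lpsi * \<delta>"
  proof -
    have "norm (integral \<Omega> (\<lambda>y. W p E y - W p' E' y)) \<le> integral \<Omega> (\<lambda>y. Lpsi * \<delta> * \<rho> y)"
      by (rule integral_norm_bound_integral)
        (use W_int[OF cE] W_int[OF cE'] rho_int h1 in \<open>auto intro: integrable_diff integrable_on_mult_right\<close>)
    moreover have "integral \<Omega> (\<lambda>y. W p E y - W p' E' y) = D p E - D p' E'"
      unfolding D_def by (rule integral_diff[OF W_int[OF cE] W_int[OF cE']])
    moreover have "integral \<Omega> (\<lambda>y. Lpsi * \<delta> * \<rho> y) = Lpsi * \<delta>" using rho_mass by simp
    ultimately show ?thesis using rho_mass by simp
  qed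
  have h3: "norm (N p E V - N p' E' V') \<le> Lpsi * \<delta> * M + dV"
  proof -
    have "norm (integral \<Omega> (\<lambda>y. W p E y *\<^sub>R V y - W p' E' y *\<^sub>R V' y))
        \<le> integral \<Omega> (\<lambda>y. (Lpsi * \<delta> * M + dV) * \<rho> y)"
    proof (rule integral_norm_bound_integral)
      show "(\<lambda>y. W p E y *\<^sub>R V y - W p' E' y *\<^sub>R V' y) integrable_on \<Omega>"
        using WV_int[OF cE cV bV] WV_int[OF cE' cV' bV'] by (rule integrable_diff)
      show "(\<lambda>y. (Lpsi * \<delta> * M + dV) * \<rho> y) integrable_on \<Omega>"
        using rho_int by (rule integrable_on_mult_right)
      fix y assume y: "y \<in> \<Omega>"
      have eq: "W p E y *\<^sub>R V y - W p' E' y *\<^sub>R V' y = (W p E y - W p' E' y) *\<^sub>R V y + W p' E' y *\<^sub>R (V y - V' y)"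
        by (simp add: algebra_simps)
      have "norm ((W p E y - W p' E' y) *\<^sub>R V y) \<le> (Lpsi * \<delta> * \<rho> y) * M"
        using h1[OF y] bV[OF y] by (simp add: mult_mono)
      moreover have "norm (W p' E' y *\<^sub>R (V y - V' y)) \<le> \<rho> y * dV"
        using W_nn[OF y, of p' E'] W_le[OF y, of p' E'] dV[OF y] rho_nn[OF y] by (simp add: mult_mono)
      ultimately show "norm (W p E y *\<^sub>R V y - W p' E' y *\<^sub>R V' y) \<le> (Lpsi * \<delta> * M + dV) * \<rho> y"
        unfolding eq using norm_triangle_ineq[of "(W p E y - W p' E' y) *\<^sub>R V y" "W p' E' y *\<^sub>R (V y - V' y)"]
        by (simp add: algebra_simps)
    qed
    moreover have "integral \<Omega> (\<lambda>y. W p E y *\<^sub>R V y - W p' E' y *\<^sub>R V' y) = N p E V - N p' E' V'"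
      unfolding N_def by (rule integral_diff[OF WV_int[OF cE cV bV] WV_int[OF cE' cV' bV']])
    moreover have "integral \<Omega> (\<lambda>y. (Lpsi * \<delta> * M + dV) * \<rho> y) = Lpsi * \<delta> * M + dV" using rho_mass by simp
    ultimately show ?thesis using rho_mass by simp
  qed
  have hN': "norm (N p' E' V') \<le> M * D p' E'" using N_bound[OF cE' cV' bV'] .
  define a where "a = D p E" define b where "b = D p' E'"
  have a: "a \<ge> c" and b: "b \<ge> c" using D unfolding a_def b_def by auto
  have eq: "Gf p E V - Gf p' E' V' = (1/a) *\<^sub>R (N p E V - N p' E' V') + ((b - a) / (a*b)) *\<^sub>R N p' E' V'"
  proof -
    have ab: "1/a - 1/b = (b - a) / (a*b)" using a b c0 by (simp add: field_simps)
    have "Gf p E V - Gf p' E' V' = (1/a) *\<^sub>R N p E V - (1/b) *\<^sub>R N p' E' V'"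
      unfolding Gf_def a_def b_def by simp
    also have "\<dots> = (1/a) *\<^sub>R (N p E V - N p' E' V') + (1/a - 1/b) *\<^sub>R N p' E' V'"
      by (simp add: scaleR_diff_right scaleR_diff_left)
    finally show ?thesis unfolding ab .
  qed
  have t1: "norm ((1/a) *\<^sub>R (N p E V - N p' E' V')) \<le> (Lpsi * \<delta> * M + dV) / c"
  proof -
    have "norm ((1/a) *\<^sub>R (N p E V - N p' E' V')) = norm (N p E V - N p' E' V') / a"
      using a c0 by simp
    also have "\<dots> \<le> (Lpsi * \<delta> * M + dV) / a" using h3 a c0 by (simp add: divide_right_mono)
    also have "\<dots> \<le> (Lpsi * \<delta> * M + dV) / c" using a c0 Lpsi(1) \<delta>0 M0 dV0
      by (intro divide_left_mono) auto
    finally show ?thesis .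
  qed
  have t2: "norm (((b - a) / (a*b)) *\<^sub>R N p' E' V') \<le> M * Lpsi * \<delta> / c"
  proof -
    have "norm (((b - a) / (a*b)) *\<^sub>R N p' E' V') = \<bar>b - a\<bar> / (a*b) * norm (N p' E' V')"
      using a b c0 by (simp add: abs_mult)
    also have "\<dots> \<le> \<bar>b - a\<bar> / (a*b) * (M * b)"
      using hN' a b c0 unfolding b_def by (intro mult_left_mono) auto
    also have "\<dots> = M * \<bar>b - a\<bar> / a" using a b c0 by (simp add: field_simps)
    also have "\<dots> \<le> M * (Lpsi * \<delta>) / a"
      using h2 M0 a c0 unfolding a_def b_def by (intro divide_right_mono mult_left_mono) (auto simp: abs_minus_commute)
    also have "\<dots> \<le> M * (Lpsi * \<delta>) / c" using a c0 Lpsi(1) \<delta>0 M0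
      by (intro divide_left_mono) auto
    finally show ?thesis by (simp add: mult.assoc)
  qed
  have "norm (Gf p E V - Gf p' E' V') \<le> (Lpsi * \<delta> * M + dV) / c + M * Lpsi * \<delta> / c"
    unfolding eq using t1 t2 by (intro norm_triangle_le) linarith
  also have "\<dots> = (2 * M * Lpsi * \<delta> + dV) / c" by (simp add: add_divide_distrib[symmetric] algebra_simps)
  also have "\<dots> \<le> (2 * M * Lpsi + 1) * (\<delta> + dV) / c"
  proof -
    have "2 * M * Lpsi * \<delta> + dV \<le> (2 * M * Lpsi + 1) * (\<delta> + dV)"
      using M0 Lpsi(1) \<delta>0 dV0 by (simp add: algebra_simps)
    then show ?thesis using c0 by (simp add: divide_right_mono)
  qed
  finally show ?thesis unfolding Lc_def c_def \<delta>_def by (simp add: field_simps)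
qed

end


lemma pow_has_integral:
  assumes "0 \<le> t"
  shows "((\<lambda>s. c * s^m) has_integral c * t^(Suc m) / Suc m) {0..t}"
proof -
  have "((\<lambda>s. c * s^m) has_integral (c * t^(Suc m) / Suc m - c * 0^(Suc m) / Suc m)) {0..t}"
  proof (rule fundamental_theorem_of_calculus[OF assms])
    fix x :: real
    have "((\<lambda>s. s^(Suc m)) has_real_derivative real (Suc m) * x^m) (at x within {0..t})"
      using DERIV_pow[of "Suc m" x "{0..t}"] by simp
    then have "((\<lambda>s. c * s^(Suc m) / Suc m) has_real_derivative c * (real (Suc m) * x^m) / Suc m) (at x within {0..t})"
      by (intro DERIV_cdivide DERIV_cmult)
    then have "((\<lambda>s. c * s^(Suc m) / Suc m) has_real_derivative c * x^m) (at x within {0..t})"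
      by (simp del: of_nat_Suc)
    then show "((\<lambda>s. c * s^(Suc m) / Suc m) has_vector_derivative c * x^m) (at x within {0..t})"
      by (simp add: has_real_derivative_iff_has_vector_derivative)
  qed
  then show ?thesis by simp
qed

lemma pow_integral: "0 \<le> (t::real) \<Longrightarrow> integral {0..t} (\<lambda>s. c * s^m) = c * t^(Suc m) / Suc m"
  using pow_has_integral by blast

lemma pow_integrable: "0 \<le> (t::real) \<Longrightarrow> (\<lambda>s. c * s^m) integrable_on {0..t}"
  using pow_has_integral[of t c m] has_integral_integrable by blast

lemma gronwall_iter:
  fixes f :: "nat \<Rightarrow> real \<Rightarrow> 'b \<Rightarrow> real"
  assumes K: "K \<ge> 0" and C: "C \<ge> 0"
    and base: "\<And>t x. t \<in> {0..T} \<Longrightarrow> x \<in> X \<Longrightarrow> f 0 t x \<le> C"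
    and step: "\<And>n c m. c \<ge> 0 \<Longrightarrow> (\<forall>s\<in>{0..T}. \<forall>y\<in>X. f n s y \<le> c * s^m) \<Longrightarrow>
        (\<forall>t\<in>{0..T}. \<forall>x\<in>X. f (Suc n) t x \<le> K * c * t^(Suc m) / Suc m)"
  shows "\<forall>t\<in>{0..T}. \<forall>x\<in>X. f n t x \<le> C * (K*t)^n / fact n"
proof (induction n)
  case 0
  then show ?case using base by simp
next
  case (Suc n)
  have "\<forall>s\<in>{0..T}. \<forall>y\<in>X. f n s y \<le> (C * K^n / fact n) * s^n"
    using Suc by (simp add: power_mult_distrib mult.assoc)
  from step[OF _ this] have "\<forall>t\<in>{0..T}. \<forall>x\<in>X. f (Suc n) t x \<le> K * (C * K^n / fact n) * t^(Suc n) / Suc n"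
    using K C by simp
  moreover have "K * (C * K^n / fact n) * t^(Suc n) / Suc n = C * (K*t)^(Suc n) / fact (Suc n)" for t
    by (simp add: power_mult_distrib field_simps del: of_nat_Suc)
  ultimately show ?case by simp
qed

lemma exp_series_summable: "summable (\<lambda>n. C * (x::real)^n / fact n)"
proof -
  have "summable (\<lambda>n. C * (inverse (fact n) * x^n))"
    using summable_exp[of x] by (rule summable_mult)
  then show ?thesis by (simp add: field_simps)
qed

lemma exp_series_zero: "(\<lambda>n. C * (x::real)^n / fact n) \<longlonglongrightarrow> 0"
  using summable_LIMSEQ_zero[OF exp_series_summable] .

lemma closure_norm_bound:
  assumes "continuous_on (closure S) f" "\<And>x. x \<in> S \<Longrightarrow> norm (f x) \<le> M" "x \<in> closure S"
  shows "norm (f x) \<le> M"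
proof -
  have "closed (closure S \<inter> f -` cball 0 M)"
    using continuous_closed_preimage[OF assms(1)] by auto
  moreover have "S \<subseteq> closure S \<inter> f -` cball 0 M"
    using assms(2) closure_subset by auto
  ultimately have "closure S \<subseteq> closure S \<inter> f -` cball 0 M"
    using closure_minimal by blast
  then show ?thesis using assms(3) by auto
qed

lemma slice_cont:
  assumes "continuous_on (A \<times> B) (\<lambda>(t, x). f t x)" "t \<in> A" "C \<subseteq> B"
  shows "continuous_on C (f t)"
proof -
  have "continuous_on C ((\<lambda>(t, x). f t x) \<circ> (\<lambda>y. (t, y)))"
    by (rule continuous_on_compose[OF _ continuous_on_subset[OF assms(1)]])
      (use assms in \<open>auto intro!: continuous_intros\<close>)
  then show ?thesis by (simp add: o_def)
qed

lemma slice_cont1: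
  assumes "continuous_on (A \<times> B) (\<lambda>(t, x). f t x)" "x \<in> B" "C \<subseteq> A"
  shows "continuous_on C (\<lambda>t. f t x)"
proof -
  have "continuous_on C ((\<lambda>(t, x). f t x) \<circ> (\<lambda>t. (t, x)))"
    by (rule continuous_on_compose[OF _ continuous_on_subset[OF assms(1)]])
      (use assms in \<open>auto intro!: continuous_intros\<close>)
  then show ?thesis by (simp add: o_def)
qed

lemma param_int_cont:
  fixes F :: "real \<Rightarrow> 'a::metric_space \<Rightarrow> 'b::euclidean_space"
  assumes cF: "continuous_on ({a..b} \<times> K) (\<lambda>(s, x). F s x)" and K: "compact K"
  shows "continuous_on ({a..b} \<times> K) (\<lambda>(t, x). integral {a..t} (\<lambda>s. F s x))"
proof (cases "a \<le> b")
  case False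
  then show ?thesis by simp
next
  case ab: True
  have cmp: "compact ({a..b} \<times> K)" using K by (simp add: compact_Times)
  have uc: "uniformly_continuous_on ({a..b} \<times> K) (\<lambda>(s, x). F s x)"
    using compact_uniformly_continuous[OF cF cmp] .
  obtain Fb where Fb: "Fb \<ge> 0" "\<And>s x. s \<in> {a..b} \<Longrightarrow> x \<in> K \<Longrightarrow> norm (F s x) \<le> Fb"
  proof -
    have "bounded ((\<lambda>(s, x). F s x) ` ({a..b} \<times> K))"
      using compact_continuous_image[OF cF cmp] compact_imp_bounded by blast
    then obtain B where B: "\<forall>z\<in>({a..b} \<times> K). norm ((\<lambda>(s, x). F s x) z) \<le> B"
      unfolding bounded_iff by blast
    have "norm (F s x) \<le> max B 0" if "s \<in> {a..b}" "x \<in> K" for s x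
    proof -
      have "(s, x) \<in> {a..b} \<times> K" using that by simp
      then have "norm (F s x) \<le> B" using B by fastforce
      then show ?thesis by simp
    qed
    then show ?thesis using that[of "max B 0"] by simp
  qed
  have cx: "continuous_on {a..b} (\<lambda>s. F s x)" if "x \<in> K" for x
    using slice_cont1[OF cF that] by simp
  show ?thesis
    unfolding continuous_on_iff
  proof (intro ballI allI impI)
    fix z e assume z: "z \<in> {a..b} \<times> K" and e: "(e::real) > 0"
    obtain t x where tx: "z = (t, x)" "t \<in> {a..b}" "x \<in> K" using z by auto
    define e1 where "e1 = e / (2 * (b - a + 1))"
    have e1: "e1 > 0" unfolding e1_def using e ab by simp
    obtain d1 where d1: "d1 > 0" "\<And>z z'. z \<in> {a..b} \<times> K \<Longrightarrow> z' \<in> {a..b} \<times> K \<Longrightarrow> dist z' z < d1 \<Longrightarrow>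
        dist ((\<lambda>(s, x). F s x) z') ((\<lambda>(s, x). F s x) z) < e1"
      using uc[unfolded uniformly_continuous_on_def, rule_format, OF e1] by blast
    define d where "d = min d1 (e / (2 * (Fb + 1)))"
    have d: "d > 0" unfolding d_def using d1 e Fb by simp
    show "\<exists>d>0. \<forall>z'\<in>{a..b} \<times> K. dist z' z < d \<longrightarrow>
        dist ((\<lambda>(t, x). integral {a..t} (\<lambda>s. F s x)) z') ((\<lambda>(t, x). integral {a..t} (\<lambda>s. F s x)) z) < e"
    proof (intro exI[of _ d] conjI d ballI impI)
      fix z' assume z': "z' \<in> {a..b} \<times> K" and dz: "dist z' z < d"
      obtain t' x' where tx': "z' = (t', x')" "t' \<in> {a..b}" "x' \<in> K" using z' by auto
      have dxx: "dist x' x < d1"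
        using dz d_def dist_snd_le[of z' z] tx tx' by simp
      have dtt: "\<bar>t' - t\<bar> < e / (2 * (Fb + 1))"
        using dz d_def dist_fst_le[of z' z] tx tx' by (simp add: dist_real_def)
      have p1: "norm (integral {a..t'} (\<lambda>s. F s x') - integral {a..t'} (\<lambda>s. F s x)) \<le> e1 * (t' - a)"
      proof -
        have i1: "(\<lambda>s. F s x') integrable_on {a..t'}" "(\<lambda>s. F s x) integrable_on {a..t'}"
          using integrable_continuous_real[OF continuous_on_subset[OF cx]] tx tx' by auto
        have "norm (integral {a..t'} (\<lambda>s. F s x' - F s x)) \<le> integral {a..t'} (\<lambda>s. e1)"
        proof (rule integral_norm_bound_integral)
          show "(\<lambda>s. F s x' - F s x) integrable_on {a..t'}" using i1 by (rule integrable_diff)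
          fix s assume s: "s \<in> {a..t'}"
          then have "s \<in> {a..b}" using tx' by auto
          then have "dist ((\<lambda>(s, x). F s x) (s, x')) ((\<lambda>(s, x). F s x) (s, x)) < e1"
            using d1(2)[of "(s, x)" "(s, x')"] dxx tx tx' by (simp add: dist_Pair_Pair)
          then show "norm (F s x' - F s x) \<le> e1" by (simp add: dist_norm)
        qed auto
        moreover have "integral {a..t'} (\<lambda>s. F s x' - F s x) = integral {a..t'} (\<lambda>s. F s x') - integral {a..t'} (\<lambda>s. F s x)"
          using i1 by (rule integral_diff)
        ultimately show ?thesis using tx' by (simp add: mult.commute)
      qed
      have p2: "norm (integral {a..t'} (\<lambda>s. F s x) - integral {a..t} (\<lambda>s. F s x)) \<le> Fb * \<bar>t' - t\<bar>"
      proof -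
        have ib: "(\<lambda>s. F s x) integrable_on {a..b}" using integrable_continuous_real[OF cx[OF tx(3)]] .
        have gen: "norm (integral {a..v} (\<lambda>s. F s x) - integral {a..u} (\<lambda>s. F s x)) \<le> Fb * (v - u)"
          if uv: "u \<le> v" "u \<in> {a..b}" "v \<in> {a..b}" for u v
        proof -
          have "integral {a..u} (\<lambda>s. F s x) + integral {u..v} (\<lambda>s. F s x) = integral {a..v} (\<lambda>s. F s x)"
            by (rule Henstock_Kurzweil_Integration.integral_combine) (use uv integrable_on_subinterval[OF ib] in auto)
          moreover have "norm (integral {u..v} (\<lambda>s. F s x)) \<le> integral {u..v} (\<lambda>s. Fb)"
            by (rule integral_norm_bound_integral)
              (use uv Fb(2) tx integrable_on_subinterval[OF ib] in auto)
          moreover have "integral {u..v} (\<lambda>s. Fb) = Fb * (v - u)" using uv by simp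
          ultimately have "norm (integral {u..v} (\<lambda>s. F s x)) \<le> Fb * (v - u)"
            and "integral {a..v} (\<lambda>s. F s x) - integral {a..u} (\<lambda>s. F s x) = integral {u..v} (\<lambda>s. F s x)"
            by (auto simp: algebra_simps)
          then show ?thesis by simp
        qed
        show ?thesis
        proof (cases "t \<le> t'")
          case True then show ?thesis using gen[of t t'] tx tx' by simp
        next
          case False then show ?thesis using gen[of t' t] tx tx' by (simp add: norm_minus_commute)
        qed
      qed
      have "e1 * (t' - a) \<le> e1 * (b - a)" using e1 tx' by simp
      also have "\<dots> < e / 2" unfolding e1_def using e ab by (simp add: field_simps)
      finally have q1: "e1 * (t' - a) < e / 2" .
      have "Fb * \<bar>t' - t\<bar> \<le> Fb * (e / (2 * (Fb + 1)))" using mult_left_mono[OF less_imp_le[OF dtt] Fb(1)] by simp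
      also have "\<dots> < e / 2" using e Fb(1) by (simp add: field_simps)
      finally have q2: "Fb * \<bar>t' - t\<bar> < e / 2" .
      have "norm (integral {a..t'} (\<lambda>s. F s x') - integral {a..t} (\<lambda>s. F s x)) < e"
        using norm_triangle_lt[of "integral {a..t'} (\<lambda>s. F s x') - integral {a..t'} (\<lambda>s. F s x)"
            "integral {a..t'} (\<lambda>s. F s x) - integral {a..t} (\<lambda>s. F s x)" e] p1 p2 q1 q2 by simp
      then show "dist ((\<lambda>(t, x). integral {a..t} (\<lambda>s. F s x)) z') ((\<lambda>(t, x). integral {a..t} (\<lambda>s. F s x)) z) < e"
        using tx tx' by (simp add: dist_norm)
    qed
  qed
qed



locale hsetting = setting +
  fixes \<tau> :: real and \<eta>h vh :: "real \<Rightarrow> 'a \<Rightarrow> 'a"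
  assumes tau: "\<tau> > 0"
    and hcE: "continuous_on ({-\<tau>..0} \<times> closure \<Omega>) (\<lambda>(s, x). \<eta>h s x)"
    and hcV: "continuous_on ({-\<tau>..0} \<times> closure \<Omega>) (\<lambda>(s, x). vh s x)"
begin
lemma cl_compact: "compact (closure \<Omega>)"
  using bnd by (simp add: compact_closure)
lemma hist_compact: "compact ({-\<tau>..0} \<times> closure \<Omega>)"
  by (intro compact_Times compact_Icc cl_compact)
definition Mv where "Mv = (SUP p\<in>{-\<tau>..0} \<times> \<Omega>. norm (vh (fst p) (snd p)))"

lemma bdd_hist:
  assumes "continuous_on ({-\<tau>..0} \<times> closure \<Omega>) (\<lambda>(s, x). f s x)"
  shows "bdd_above ((\<lambda>p. norm (f (fst p) (snd p))) ` ({-\<tau>..0} \<times> closure \<Omega>))"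
proof -
  have "bounded ((\<lambda>(s, x). f s x) ` ({-\<tau>..0} \<times> closure \<Omega>))"
    using compact_imp_bounded[OF compact_continuous_image[OF assms hist_compact]] .
  then obtain B where B: "\<forall>w\<in>(\<lambda>(s, x). f s x) ` ({-\<tau>..0} \<times> closure \<Omega>). norm w \<le> B"
    unfolding bounded_iff by blast
  have "norm (f (fst p) (snd p)) \<le> B" if "p \<in> {-\<tau>..0} \<times> closure \<Omega>" for p
    using B that by (cases p) auto
  then show ?thesis by (auto intro!: bdd_aboveI[where M=B])
qed

lemma Mv_bound: "s \<in> {-\<tau>..0} \<Longrightarrow> y \<in> \<Omega> \<Longrightarrow> norm (vh s y) \<le> Mv"
  unfolding Mv_def
proof (rule cSUP_upper2[where x="(s, y)"])
  show "bdd_above ((\<lambda>p. norm (vh (fst p) (snd p))) ` ({-\<tau>..0} \<times> \<Omega>))"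
  proof -
    have "(\<lambda>p. norm (vh (fst p) (snd p))) ` ({-\<tau>..0} \<times> \<Omega>) \<subseteq> (\<lambda>p. norm (vh (fst p) (snd p))) ` ({-\<tau>..0} \<times> closure \<Omega>)"
      using closure_subset by (intro image_mono) auto
    then show ?thesis by (rule bdd_above_mono[OF bdd_hist[OF hcV]])
  qed
qed auto

lemma Mv_bound_cl: assumes "s \<in> {-\<tau>..0}" "y \<in> closure \<Omega>" shows "norm (vh s y) \<le> Mv"
  using closure_norm_bound[OF slice_cont[OF hcV assms(1) order_refl] Mv_bound[OF assms(1)] assms(2)] .

lemma Mv_nn: "Mv \<ge> 0"
proof -
  obtain y where "y \<in> \<Omega>" using Omega_ne by blast
  then have "norm (vh 0 y) \<le> Mv" using Mv_bound[of 0 y] tau by simp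
  then show ?thesis using norm_ge_zero[of "vh 0 y"] by linarith
qed

definition Bh where "Bh = (SUP p\<in>{-\<tau>..0} \<times> closure \<Omega>. norm (\<eta>h (fst p) (snd p)))"

lemma Bh_bound: "s \<in> {-\<tau>..0} \<Longrightarrow> y \<in> closure \<Omega> \<Longrightarrow> norm (\<eta>h s y) \<le> Bh"
  unfolding Bh_def by (rule cSUP_upper2[where x="(s, y)", OF bdd_hist[OF hcE]]) auto

lemma Bh_nn: "Bh \<ge> 0"
proof -
  obtain y where "y \<in> \<Omega>" using Omega_ne by blast
  then have "norm (\<eta>h 0 y) \<le> Bh" using Bh_bound[of 0 y] tau closure_subset by auto
  then show ?thesis using norm_ge_zero[of "\<eta>h 0 y"] by linarith
qed

definition GG :: "(real \<Rightarrow> 'a \<Rightarrow> 'a) \<Rightarrow> (real \<Rightarrow> 'a \<Rightarrow> 'a) \<Rightarrow> real \<Rightarrow> 'a \<Rightarrow> 'a" where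
  "GG e v s x = Gf (e s x) (e (s - \<tau>)) (v (s - \<tau>))"

lemma G_diff:
  assumes ce1: "continuous_on ({-\<tau>..T} \<times> closure \<Omega>) (\<lambda>(t, x). e1 t x)"
    and ce2: "continuous_on ({-\<tau>..T} \<times> closure \<Omega>) (\<lambda>(t, x). e2 t x)"
    and cv1: "continuous_on ({-\<tau>..T} \<times> closure \<Omega>) (\<lambda>(t, x). v1 t x)"
    and cv2: "continuous_on ({-\<tau>..T} \<times> closure \<Omega>) (\<lambda>(t, x). v2 t x)"
    and be1: "\<And>t x. t \<in> {-\<tau>..T} \<Longrightarrow> x \<in> closure \<Omega> \<Longrightarrow> norm (e1 t x) \<le> B"
    and be2: "\<And>t x. t \<in> {-\<tau>..T} \<Longrightarrow> x \<in> closure \<Omega> \<Longrightarrow> norm (e2 t x) \<le> B"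
    and bv1: "\<And>t x. t \<in> {-\<tau>..T} \<Longrightarrow> x \<in> closure \<Omega> \<Longrightarrow> norm (v1 t x) \<le> M"
    and bv2: "\<And>t x. t \<in> {-\<tau>..T} \<Longrightarrow> x \<in> closure \<Omega> \<Longrightarrow> norm (v2 t x) \<le> M"
    and s1: "s1 \<in> {0..T}" and x1: "x1 \<in> closure \<Omega>"
    and s2: "s2 \<in> {0..T}" and x2: "x2 \<in> closure \<Omega>"
    and d0: "norm (e1 s1 x1 - e2 s2 x2) \<le> d0"
    and d1: "\<And>y. y \<in> \<Omega> \<Longrightarrow> norm (e1 (s1 - \<tau>) y - e2 (s2 - \<tau>) y) \<le> d1"
    and d2: "\<And>y. y \<in> \<Omega> \<Longrightarrow> norm (v1 (s1 - \<tau>) y - v2 (s2 - \<tau>) y) \<le> d2"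
  shows "norm (GG e1 v1 s1 x1 - GG e2 v2 s2 x2) \<le> Lc B M * (d0 + d1 + d2)"
proof -
  have st: "s1 - \<tau> \<in> {-\<tau>..T}" "s1 \<in> {-\<tau>..T}" "s2 - \<tau> \<in> {-\<tau>..T}" "s2 \<in> {-\<tau>..T}"
    using s1 s2 tau by auto
  have sub: "\<Omega> \<subseteq> closure \<Omega>" by (rule closure_subset)
  have "norm (Gf (e1 s1 x1) (e1 (s1 - \<tau>)) (v1 (s1 - \<tau>)) - Gf (e2 s2 x2) (e2 (s2 - \<tau>)) (v2 (s2 - \<tau>)))
      \<le> Lc B M * (norm (e1 s1 x1 - e2 s2 x2) + d1 + d2)"
    by (rule Gf_lip[OF slice_cont[OF ce1 st(1) sub] slice_cont[OF ce2 st(3) sub]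
          slice_cont[OF cv1 st(1) sub] slice_cont[OF cv2 st(3) sub]])
      (use be1 be2 bv1 bv2 st x1 x2 sub d1 d2 in auto)
  also have "\<dots> \<le> Lc B M * (d0 + d1 + d2)"
  proof -
    have "B \<ge> 0" using be1[OF st(2) x1] norm_ge_zero order_trans by blast
    moreover have "M \<ge> 0" using bv1[OF st(2) x1] norm_ge_zero order_trans by blast
    ultimately have "Lc B M > 0" by (rule Lc_pos)
    then show ?thesis using d0 by (simp add: mult_left_mono)
  qed
  finally show ?thesis unfolding GG_def .
qed

lemma G_cont:
  assumes ce: "continuous_on ({-\<tau>..T} \<times> closure \<Omega>) (\<lambda>(t, x). e t x)"
    and cv: "continuous_on ({-\<tau>..T} \<times> closure \<Omega>) (\<lambda>(t, x). v t x)"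
    and be: "\<And>t x. t \<in> {-\<tau>..T} \<Longrightarrow> x \<in> closure \<Omega> \<Longrightarrow> norm (e t x) \<le> B"
    and bv: "\<And>t x. t \<in> {-\<tau>..T} \<Longrightarrow> x \<in> closure \<Omega> \<Longrightarrow> norm (v t x) \<le> M"
    and B0: "B \<ge> 0" and M0: "M \<ge> 0"
  shows "continuous_on ({0..T} \<times> closure \<Omega>) (\<lambda>(s, x). GG e v s x)"
proof -
  have cmp: "compact ({-\<tau>..T} \<times> closure \<Omega>)" by (intro compact_Times compact_Icc cl_compact)
  have ue: "uniformly_continuous_on ({-\<tau>..T} \<times> closure \<Omega>) (\<lambda>(t, x). e t x)"
    using compact_uniformly_continuous[OF ce cmp] .
  have uv: "uniformly_continuous_on ({-\<tau>..T} \<times> closure \<Omega>) (\<lambda>(t, x). v t x)"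
    using compact_uniformly_continuous[OF cv cmp] .
  have L0: "Lc B M > 0" using Lc_pos[OF B0 M0] .
  show ?thesis
    unfolding continuous_on_iff
  proof (intro ballI allI impI)
    fix z and \<epsilon> :: real assume z: "z \<in> {0..T} \<times> closure \<Omega>" and \<epsilon>: "\<epsilon> > 0"
    obtain s x where sx: "z = (s, x)" "s \<in> {0..T}" "x \<in> closure \<Omega>" using z by auto
    define \<epsilon>' where "\<epsilon>' = \<epsilon> / (3 * Lc B M + 3)"
    have \<epsilon>': "\<epsilon>' > 0" unfolding \<epsilon>'_def using \<epsilon> L0 by simp
    obtain d1 where d1: "d1 > 0" "\<forall>z\<in>{-\<tau>..T} \<times> closure \<Omega>. \<forall>z'\<in>{-\<tau>..T} \<times> closure \<Omega>.
        dist z' z < d1 \<longrightarrow> dist ((\<lambda>(t, x). e t x) z') ((\<lambda>(t, x). e t x) z) < \<epsilon>'"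
      using ue[unfolded uniformly_continuous_on_def] \<epsilon>' by metis
    obtain d2 where d2: "d2 > 0" "\<forall>z\<in>{-\<tau>..T} \<times> closure \<Omega>. \<forall>z'\<in>{-\<tau>..T} \<times> closure \<Omega>.
        dist z' z < d2 \<longrightarrow> dist ((\<lambda>(t, x). v t x) z') ((\<lambda>(t, x). v t x) z) < \<epsilon>'"
      using uv[unfolded uniformly_continuous_on_def] \<epsilon>' by metis
    show "\<exists>d>0. \<forall>z'\<in>{0..T} \<times> closure \<Omega>. dist z' z < d \<longrightarrow>
        dist ((\<lambda>(s, x). GG e v s x) z') ((\<lambda>(s, x). GG e v s x) z) < \<epsilon>"
    proof (intro exI[of _ "min d1 d2"] conjI ballI impI)
      show "min d1 d2 > 0" using d1 d2 by simp
      fix z' assume z': "z' \<in> {0..T} \<times> closure \<Omega>" and dz: "dist z' z < min d1 d2"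
      obtain s' x' where sx': "z' = (s', x')" "s' \<in> {0..T}" "x' \<in> closure \<Omega>" using z' by auto
      have dss: "dist s' s < min d1 d2" using dz dist_fst_le[of z' z] sx sx' by simp
      have mem: "(s, x) \<in> {-\<tau>..T} \<times> closure \<Omega>" "(s', x') \<in> {-\<tau>..T} \<times> closure \<Omega>"
        using sx sx' tau by auto
      have memy: "(s - \<tau>, y) \<in> {-\<tau>..T} \<times> closure \<Omega>" "(s' - \<tau>, y) \<in> {-\<tau>..T} \<times> closure \<Omega>"
        if "y \<in> \<Omega>" for y using sx sx' tau that closure_subset by auto
      have dy: "dist (s' - \<tau>, y) (s - \<tau>, y) < min d1 d2" for y
        using dss by (simp add: dist_Pair_Pair dist_real_def)
      have "norm (GG e v s' x' - GG e v s x) \<le> Lc B M * (\<epsilon>' + \<epsilon>' + \<epsilon>')"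
      proof (rule G_diff[OF ce ce cv cv be be bv bv sx'(2,3) sx(2,3)])
        show "norm (e s' x' - e s x) \<le> \<epsilon>'"
          using d1(2)[rule_format, OF mem(1) mem(2)] dz sx sx' by (simp add: dist_norm)
        show "norm (e (s' - \<tau>) y - e (s - \<tau>) y) \<le> \<epsilon>'" if "y \<in> \<Omega>" for y
          using d1(2)[rule_format, OF memy[OF that]] dy[of y] by (simp add: dist_norm)
        show "norm (v (s' - \<tau>) y - v (s - \<tau>) y) \<le> \<epsilon>'" if "y \<in> \<Omega>" for y
          using d2(2)[rule_format, OF memy[OF that]] dy[of y] by (simp add: dist_norm)
      qed
      also have "\<dots> = (3 * Lc B M) * \<epsilon> / (3 * Lc B M + 3)" unfolding \<epsilon>'_def by simp
      also have "\<dots> < \<epsilon>" using \<epsilon> L0 by (simp add: divide_less_eq)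
      finally show "dist ((\<lambda>(s, x). GG e v s x) z') ((\<lambda>(s, x). GG e v s x) z) < \<epsilon>"
        using sx sx' by (simp add: dist_norm)
    qed
  qed
qed

end


lemma cont_glue:
  fixes \<tau> T :: real
  assumes T: "T \<ge> 0" and K: "closed K"
    and cA: "continuous_on ({-\<tau>..0} \<times> K) (\<lambda>(t, x). A t x)"
    and cB: "continuous_on ({0..T} \<times> K) (\<lambda>(t, x). B t x)"
    and eq: "\<And>x. x \<in> K \<Longrightarrow> A 0 x = B 0 x"
    and tau: "\<tau> \<ge> 0"
  shows "continuous_on ({-\<tau>..T} \<times> K) (\<lambda>(t, x). if t \<le> 0 then A t x else B t x)"
proof -
  have "continuous_on ({-\<tau>..0} \<times> K \<union> {0..T} \<times> K)
      (\<lambda>z. if fst z \<le> 0 then (\<lambda>(t, x). A t x) z else (\<lambda>(t, x). B t x) z)"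
  proof (rule continuous_on_cases)
    show "closed ({-\<tau>..0} \<times> K)" using K by (simp add: closed_Times)
    show "closed ({0..T} \<times> K)" using K by (simp add: closed_Times)
    show "\<forall>z. z \<in> {-\<tau>..0} \<times> K \<and> \<not> fst z \<le> 0 \<or> z \<in> {0..T} \<times> K \<and> fst z \<le> 0 \<longrightarrow>
        (\<lambda>(t, x). A t x) z = (\<lambda>(t, x). B t x) z"
      using eq by auto
  qed (use cA cB in auto)
  moreover have "{-\<tau>..0} \<times> K \<union> {0..T} \<times> K = {-\<tau>..T} \<times> K" using T tau by auto
  moreover have "(\<lambda>z. if fst z \<le> 0 then (\<lambda>(t, x). A t x) z else (\<lambda>(t, x). B t x) z)
      = (\<lambda>(t, x). if t \<le> 0 then A t x else B t x)" by (auto simp: fun_eq_iff)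
  ultimately show ?thesis by metis
qed

context hsetting begin

primrec it :: "nat \<Rightarrow> (real \<Rightarrow> 'a \<Rightarrow> 'a) \<times> (real \<Rightarrow> 'a \<Rightarrow> 'a)" where
  "it 0 = (\<lambda>t x. if t \<le> 0 then \<eta>h t x else \<eta>h 0 x, \<lambda>t x. if t \<le> 0 then vh t x else vh 0 x)"
| "it (Suc n) = (\<lambda>t x. if t \<le> 0 then \<eta>h t x else \<eta>h 0 x + integral {0..t} (\<lambda>s. snd (it n) s x),
     \<lambda>t x. if t \<le> 0 then vh t x else
        exp (-t) *\<^sub>R (vh 0 x + integral {0..t} (\<lambda>s. exp s *\<^sub>R GG (fst (it n)) (snd (it n)) s x)))"

lemma hist0_cont:
  "continuous_on (A \<times> closure \<Omega>) (\<lambda>(t, x). \<eta>h 0 x)" "continuous_on (A \<times> closure \<Omega>) (\<lambda>(t, x). vh 0 x)"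
  "continuous_on (A \<times> closure \<Omega>) (\<lambda>z. \<eta>h 0 (snd z))" "continuous_on (A \<times> closure \<Omega>) (\<lambda>z. vh 0 (snd z))"
proof -
  have z: "(0::real) \<in> {-\<tau>..0}" using tau by simp
  show 3: "continuous_on (A \<times> closure \<Omega>) (\<lambda>z. \<eta>h 0 (snd z))"
    by (rule continuous_on_compose2[OF slice_cont[OF hcE z order_refl] continuous_on_snd]) auto
  show 4: "continuous_on (A \<times> closure \<Omega>) (\<lambda>z. vh 0 (snd z))"
    by (rule continuous_on_compose2[OF slice_cont[OF hcV z order_refl] continuous_on_snd]) auto
  show "continuous_on (A \<times> closure \<Omega>) (\<lambda>(t, x). \<eta>h 0 x)" using 3 by (simp add: case_prod_beta)
  show "continuous_on (A \<times> closure \<Omega>) (\<lambda>(t, x). vh 0 x)" using 4 by (simp add: case_prod_beta)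
qed

definition ee where "ee n = fst (it n)"
definition vv where "vv n = snd (it n)"

lemma ee_0: "ee 0 t x = (if t \<le> 0 then \<eta>h t x else \<eta>h 0 x)"
  unfolding ee_def by simp
lemma vv_0: "vv 0 t x = (if t \<le> 0 then vh t x else vh 0 x)"
  unfolding vv_def by simp
lemma ee_Suc: "ee (Suc n) t x = (if t \<le> 0 then \<eta>h t x else \<eta>h 0 x + integral {0..t} (\<lambda>s. vv n s x))"
  unfolding ee_def vv_def by simp
lemma vv_Suc: "vv (Suc n) t x = (if t \<le> 0 then vh t x else
        exp (-t) *\<^sub>R (vh 0 x + integral {0..t} (\<lambda>s. exp s *\<^sub>R GG (ee n) (vv n) s x)))"
  unfolding ee_def vv_def by simp

lemma ee_neg: "t \<le> 0 \<Longrightarrow> ee n t x = \<eta>h t x"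
  by (cases n) (simp_all add: ee_0 ee_Suc)
lemma vv_neg: "t \<le> 0 \<Longrightarrow> vv n t x = vh t x"
  by (cases n) (simp_all add: vv_0 vv_Suc)

definition ST :: "real \<Rightarrow> (real \<times> 'a) set" where "ST T = {-\<tau>..T} \<times> closure \<Omega>"

definition BT :: "real \<Rightarrow> real" where "BT T = Bh + Mv * T"

lemma int_norm_bound_const:
  fixes f :: "real \<Rightarrow> 'b::euclidean_space"
  assumes "f integrable_on {0..t}" "\<And>s. s \<in> {0..t} \<Longrightarrow> norm (f s) \<le> c" "t \<ge> 0"
  shows "norm (integral {0..t} f) \<le> c * t"
proof -
  have "norm (integral {0..t} f) \<le> integral {0..t} (\<lambda>s. c)"
    by (rule integral_norm_bound_integral) (use assms in auto)
  then show ?thesis using assms(3) by (simp add: mult.commute)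
qed

lemma inv_it:
  assumes T: "T \<ge> 0"
  shows "continuous_on (ST T) (\<lambda>(t, x). ee n t x) \<and> continuous_on (ST T) (\<lambda>(t, x). vv n t x) \<and>
    (\<forall>t\<in>{-\<tau>..T}. \<forall>x\<in>closure \<Omega>. norm (ee n t x) \<le> BT T \<and> norm (vv n t x) \<le> Mv)"
proof (induction n)
  case 0
  have c1: "continuous_on ({-\<tau>..T} \<times> closure \<Omega>) (\<lambda>(t, x). if t \<le> 0 then \<eta>h t x else \<eta>h 0 x)"
    by (rule cont_glue[OF T closed_closure hcE])
      (use tau hist0_cont in auto)
  have c2: "continuous_on ({-\<tau>..T} \<times> closure \<Omega>) (\<lambda>(t, x). if t \<le> 0 then vh t x else vh 0 x)"
    by (rule cont_glue[OF T closed_closure hcV])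
      (use tau hist0_cont in auto)
  have b: "norm (ee 0 t x) \<le> BT T \<and> norm (vv 0 t x) \<le> Mv" if "t \<in> {-\<tau>..T}" "x \<in> closure \<Omega>" for t x
  proof -
    have "norm (ee 0 t x) \<le> Bh" using Bh_bound[of t x] Bh_bound[of 0 x] that tau unfolding ee_0 by auto
    moreover have "Bh \<le> BT T" unfolding BT_def using Mv_nn T by simp
    moreover have "norm (vv 0 t x) \<le> Mv" using Mv_bound_cl[of t x] Mv_bound_cl[of 0 x] that tau unfolding vv_0 by auto
    ultimately show ?thesis by linarith
  qed
  show ?case using c1 c2 b unfolding ST_def ee_0[abs_def] vv_0[abs_def] by auto
next
  case (Suc n)
  have ce: "continuous_on (ST T) (\<lambda>(t, x). ee n t x)" and cv: "continuous_on (ST T) (\<lambda>(t, x). vv n t x)"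
    and be: "\<And>t x. t \<in> {-\<tau>..T} \<Longrightarrow> x \<in> closure \<Omega> \<Longrightarrow> norm (ee n t x) \<le> BT T"
    and bv: "\<And>t x. t \<in> {-\<tau>..T} \<Longrightarrow> x \<in> closure \<Omega> \<Longrightarrow> norm (vv n t x) \<le> Mv"
    using Suc by auto
  have sub: "{0..T} \<times> closure \<Omega> \<subseteq> ST T" unfolding ST_def using tau by auto
  have BT0: "BT T \<ge> 0" unfolding BT_def using Bh_nn Mv_nn T by simp
  have cG: "continuous_on ({0..T} \<times> closure \<Omega>) (\<lambda>(s, x). GG (ee n) (vv n) s x)"
    by (rule G_cont[OF ce[unfolded ST_def] cv[unfolded ST_def] be bv BT0 Mv_nn])
  have cvs: "continuous_on ({0..T} \<times> closure \<Omega>) (\<lambda>(s, x). vv n s x)"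
    using continuous_on_subset[OF cv sub] .
  have cEx: "continuous_on ({0..T} \<times> closure \<Omega>) (\<lambda>(s, x). exp s *\<^sub>R GG (ee n) (vv n) s x)"
  proof -
    have "continuous_on ({0..T} \<times> closure \<Omega>) (\<lambda>z. exp (fst z) *\<^sub>R (\<lambda>(s, x). GG (ee n) (vv n) s x) z)"
      by (intro continuous_intros cG)
    then show ?thesis by (simp add: case_prod_beta)
  qed
  have i1: "continuous_on ({0..T} \<times> closure \<Omega>) (\<lambda>(t, x). integral {0..t} (\<lambda>s. vv n s x))"
    using param_int_cont[OF cvs cl_compact] .
  have i2: "continuous_on ({0..T} \<times> closure \<Omega>) (\<lambda>(t, x). integral {0..t} (\<lambda>s. exp s *\<^sub>R GG (ee n) (vv n) s x))"
    using param_int_cont[OF cEx cl_compact] .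
  have c1: "continuous_on ({-\<tau>..T} \<times> closure \<Omega>)
      (\<lambda>(t, x). if t \<le> 0 then \<eta>h t x else \<eta>h 0 x + integral {0..t} (\<lambda>s. vv n s x))"
  proof (rule cont_glue[OF T closed_closure hcE])
    have "continuous_on ({0..T} \<times> closure \<Omega>) (\<lambda>z. \<eta>h 0 (snd z) + (\<lambda>(t, x). integral {0..t} (\<lambda>s. vv n s x)) z)"
      by (intro continuous_intros i1 hist0_cont)
    then show "continuous_on ({0..T} \<times> closure \<Omega>) (\<lambda>(t, x). \<eta>h 0 x + integral {0..t} (\<lambda>s. vv n s x))"
      by (simp add: case_prod_beta)
  qed (use tau in auto)
  have c2: "continuous_on ({-\<tau>..T} \<times> closure \<Omega>)
      (\<lambda>(t, x). if t \<le> 0 then vh t x else exp (-t) *\<^sub>R (vh 0 x + integral {0..t} (\<lambda>s. exp s *\<^sub>R GG (ee n) (vv n) s x)))"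
  proof (rule cont_glue[OF T closed_closure hcV])
    have "continuous_on ({0..T} \<times> closure \<Omega>) (\<lambda>z. exp (- fst z) *\<^sub>R (vh 0 (snd z) +
        (\<lambda>(t, x). integral {0..t} (\<lambda>s. exp s *\<^sub>R GG (ee n) (vv n) s x)) z))"
      by (intro continuous_intros i2 hist0_cont)
    then show "continuous_on ({0..T} \<times> closure \<Omega>)
        (\<lambda>(t, x). exp (-t) *\<^sub>R (vh 0 x + integral {0..t} (\<lambda>s. exp s *\<^sub>R GG (ee n) (vv n) s x)))"
      by (simp add: case_prod_beta)
  qed (use tau in auto)
  have b: "norm (ee (Suc n) t x) \<le> BT T \<and> norm (vv (Suc n) t x) \<le> Mv" if t: "t \<in> {-\<tau>..T}" and x: "x \<in> closure \<Omega>" for t x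
  proof (cases "t \<le> 0")
    case True
    then show ?thesis using Bh_bound[of t x] Mv_bound_cl[of t x] t x BT0 Mv_nn T
      unfolding ee_Suc vv_Suc BT_def by (auto intro: order_trans)
  next
    case False
    then have t0: "0 \<le> t" "t \<le> T" using t by auto
    have cvx: "continuous_on {0..t} (\<lambda>s. vv n s x)"
      using slice_cont1[OF cvs x] t0 by auto
    have "norm (integral {0..t} (\<lambda>s. vv n s x)) \<le> Mv * t"
      by (rule int_norm_bound_const[OF integrable_continuous_real[OF cvx] _ t0(1)]) (use bv t0 x tau in auto)
    then have "norm (ee (Suc n) t x) \<le> Bh + Mv * t"
      using False Bh_bound[of 0 x] x tau unfolding ee_Suc
      by (auto intro: order_trans[OF norm_triangle_ineq])
    also have "\<dots> \<le> BT T" unfolding BT_def using t0 Mv_nn by (simp add: mult_left_mono)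
    finally have r1: "norm (ee (Suc n) t x) \<le> BT T" .
    have cGx: "continuous_on {0..t} (\<lambda>s. exp s *\<^sub>R GG (ee n) (vv n) s x)"
      using slice_cont1[OF cEx x] t0 by auto
    have Gb: "norm (GG (ee n) (vv n) s x) \<le> Mv" if s: "s \<in> {0..T}" for s
    proof -
      have st: "s - \<tau> \<in> {-\<tau>..T}" "s \<in> {-\<tau>..T}" using s tau by auto
      show ?thesis unfolding GG_def
        by (rule Gf_bound[OF slice_cont[OF ce[unfolded ST_def] st(1) closure_subset] _ be[OF st(2) x]
              slice_cont[OF cv[unfolded ST_def] st(1) closure_subset]])
          (use st in \<open>auto intro: be bv closure_subset[THEN subsetD]\<close>)
    qed
    have "norm (integral {0..t} (\<lambda>s. exp s *\<^sub>R GG (ee n) (vv n) s x)) \<le> integral {0..t} (\<lambda>s. Mv * exp s)"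
    proof (rule integral_norm_bound_integral[OF integrable_continuous_real[OF cGx]])
      show "(\<lambda>s. Mv * exp s) integrable_on {0..t}"
        by (intro integrable_continuous_real continuous_intros)
      fix s assume "s \<in> {0..t}"
      then have "norm (GG (ee n) (vv n) s x) \<le> Mv" using Gb t0 by auto
      then show "norm (exp s *\<^sub>R GG (ee n) (vv n) s x) \<le> Mv * exp s" by (simp add: mult.commute)
    qed
    also have "\<dots> = Mv * (exp t - 1)" using t0 by simp
    finally have ib: "norm (integral {0..t} (\<lambda>s. exp s *\<^sub>R GG (ee n) (vv n) s x)) \<le> Mv * (exp t - 1)" .
    have "norm (vv (Suc n) t x) = exp (-t) * norm (vh 0 x + integral {0..t} (\<lambda>s. exp s *\<^sub>R GG (ee n) (vv n) s x))"
      using False unfolding vv_Suc by simp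
    also have "\<dots> \<le> exp (-t) * (Mv + Mv * (exp t - 1))"
    proof (intro mult_left_mono)
      show "norm (vh 0 x + integral {0..t} (\<lambda>s. exp s *\<^sub>R GG (ee n) (vv n) s x)) \<le> Mv + Mv * (exp t - 1)"
        using Mv_bound_cl[of 0 x] x tau ib norm_triangle_ineq[of "vh 0 x" "integral {0..t} (\<lambda>s. exp s *\<^sub>R GG (ee n) (vv n) s x)"] by auto
    qed simp
    also have "\<dots> = Mv" by (simp add: algebra_simps exp_minus field_simps)
    finally show ?thesis using r1 by simp
  qed
  show ?case using c1 c2 b unfolding ST_def ee_Suc[abs_def] vv_Suc[abs_def] by auto
qed

end


context hsetting begin

definition KT where "KT T = 1 + 3 * Lc (BT T) Mv"
definition CT where "CT T = 2 * BT T + 2 * Mv"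
definition fd where "fd n t x = norm (ee (Suc n) t x - ee n t x) + norm (vv (Suc n) t x - vv n t x)"

lemma BT_nn: "T \<ge> 0 \<Longrightarrow> BT T \<ge> 0"
  unfolding BT_def using Bh_nn Mv_nn by simp

lemma KT_nn: assumes "T \<ge> 0" shows "KT T \<ge> 0"
  unfolding KT_def using Lc_pos[OF BT_nn[OF assms] Mv_nn] by simp

lemma fd_neg: "t \<le> 0 \<Longrightarrow> fd n t x = 0"
  unfolding fd_def by (simp add: ee_neg vv_neg)

lemma delayed_bound:
  assumes c: "c \<ge> 0" and hyp: "\<forall>s\<in>{0..T}. \<forall>y\<in>closure \<Omega>. fd n s y \<le> c * s^m"
    and s: "s \<in> {0..T}" and y: "y \<in> closure \<Omega>"
  shows "norm (ee (Suc n) (s - \<tau>) y - ee n (s - \<tau>) y) \<le> c * s^m"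
    and "norm (vv (Suc n) (s - \<tau>) y - vv n (s - \<tau>) y) \<le> c * s^m"
proof -
  have "norm (ee (Suc n) (s - \<tau>) y - ee n (s - \<tau>) y) \<le> c * s^m \<and>
        norm (vv (Suc n) (s - \<tau>) y - vv n (s - \<tau>) y) \<le> c * s^m"
  proof (cases "s - \<tau> \<le> 0")
    case True
    then show ?thesis using c s by (simp add: ee_neg vv_neg)
  next
    case False
    then have s': "s - \<tau> \<in> {0..T}" using s tau by auto
    have "fd n (s - \<tau>) y \<le> c * (s - \<tau>)^m" using hyp s' y by blast
    also have "\<dots> \<le> c * s^m" using False tau c by (intro mult_left_mono power_mono) auto
    finally show ?thesis unfolding fd_def by (smt (verit) norm_ge_zero)
  qed
  then show "norm (ee (Suc n) (s - \<tau>) y - ee n (s - \<tau>) y) \<le> c * s^m"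
    and "norm (vv (Suc n) (s - \<tau>) y - vv n (s - \<tau>) y) \<le> c * s^m" by auto
qed

lemma diff_step:
  assumes T: "T \<ge> 0" and c: "c \<ge> 0" and hyp: "\<forall>s\<in>{0..T}. \<forall>y\<in>closure \<Omega>. fd n s y \<le> c * s^m"
  shows "\<forall>t\<in>{0..T}. \<forall>x\<in>closure \<Omega>. fd (Suc n) t x \<le> KT T * c * t^(Suc m) / Suc m"
proof (intro ballI)
  fix t x assume t: "t \<in> {0..T}" and x: "x \<in> closure \<Omega>"
  have RHS0: "KT T * c * t^(Suc m) / Suc m \<ge> 0" using KT_nn[OF T] c t by simp
  show "fd (Suc n) t x \<le> KT T * c * t^(Suc m) / Suc m"
  proof (cases "t \<le> 0")
    case True then show ?thesis using fd_neg RHS0 by simp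
  next
    case False
    then have t0: "0 \<le> t" "t \<le> T" "\<not> t \<le> 0" using t by auto
    note I0 = inv_it[OF T, of n] and I1 = inv_it[OF T, of "Suc n"]
    have ce0: "continuous_on (ST T) (\<lambda>(t, x). ee n t x)" and cv0: "continuous_on (ST T) (\<lambda>(t, x). vv n t x)"
      and ce1: "continuous_on (ST T) (\<lambda>(t, x). ee (Suc n) t x)" and cv1: "continuous_on (ST T) (\<lambda>(t, x). vv (Suc n) t x)"
      using I0 I1 by auto
    have be0: "\<And>t x. t \<in> {-\<tau>..T} \<Longrightarrow> x \<in> closure \<Omega> \<Longrightarrow> norm (ee n t x) \<le> BT T"
      and bv0: "\<And>t x. t \<in> {-\<tau>..T} \<Longrightarrow> x \<in> closure \<Omega> \<Longrightarrow> norm (vv n t x) \<le> Mv"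
      and be1: "\<And>t x. t \<in> {-\<tau>..T} \<Longrightarrow> x \<in> closure \<Omega> \<Longrightarrow> norm (ee (Suc n) t x) \<le> BT T"
      and bv1: "\<And>t x. t \<in> {-\<tau>..T} \<Longrightarrow> x \<in> closure \<Omega> \<Longrightarrow> norm (vv (Suc n) t x) \<le> Mv"
      using I0 I1 by auto
    have sub: "{0..t} \<times> closure \<Omega> \<subseteq> ST T" unfolding ST_def using t0 tau by auto
    have cvx0: "continuous_on {0..t} (\<lambda>s. vv n s x)"
      using slice_cont1[OF continuous_on_subset[OF cv0 sub] x order_refl] .
    have cvx1: "continuous_on {0..t} (\<lambda>s. vv (Suc n) s x)"
      using slice_cont1[OF continuous_on_subset[OF cv1 sub] x order_refl] .
    have eqA: "ee (Suc (Suc n)) t x - ee (Suc n) t x = integral {0..t} (\<lambda>s. vv (Suc n) s x - vv n s x)"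
      using t0 integral_diff[OF integrable_continuous_real[OF cvx1] integrable_continuous_real[OF cvx0]]
      unfolding ee_Suc by simp
    have nA: "norm (ee (Suc (Suc n)) t x - ee (Suc n) t x) \<le> c * t^(Suc m) / Suc m"
    proof -
      have "norm (integral {0..t} (\<lambda>s. vv (Suc n) s x - vv n s x)) \<le> integral {0..t} (\<lambda>s. c * s^m)"
      proof (rule integral_norm_bound_integral)
        show "(\<lambda>s. vv (Suc n) s x - vv n s x) integrable_on {0..t}"
          by (intro integrable_diff integrable_continuous_real cvx0 cvx1)
        show "(\<lambda>s. c * s^m) integrable_on {0..t}" using pow_integrable t0 by blast
        fix s assume s: "s \<in> {0..t}"
        have "fd n s x \<le> c * s^m" using hyp s t0 x by auto
        then show "norm (vv (Suc n) s x - vv n s x) \<le> c * s^m" unfolding fd_def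
          by (smt (verit) norm_ge_zero)
      qed
      then show ?thesis using eqA pow_integral[OF t0(1)] by simp
    qed
    define L where "L = Lc (BT T) Mv"
    have cG0: "continuous_on ({0..T} \<times> closure \<Omega>) (\<lambda>(s, x). GG (ee n) (vv n) s x)"
      by (rule G_cont[OF ce0[unfolded ST_def] cv0[unfolded ST_def] be0 bv0 BT_nn[OF T] Mv_nn])
    have cG1: "continuous_on ({0..T} \<times> closure \<Omega>) (\<lambda>(s, x). GG (ee (Suc n)) (vv (Suc n)) s x)"
      by (rule G_cont[OF ce1[unfolded ST_def] cv1[unfolded ST_def] be1 bv1 BT_nn[OF T] Mv_nn])
    have cgx: "continuous_on {0..t} (\<lambda>s. exp s *\<^sub>R GG (ee i) (vv i) s x)"
      if "continuous_on ({0..T} \<times> closure \<Omega>) (\<lambda>(s, x). GG (ee i) (vv i) s x)" for i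
    proof -
      have "continuous_on {0..t} (\<lambda>s. GG (ee i) (vv i) s x)"
        using slice_cont1[OF that x] t0 by auto
      then show ?thesis by (intro continuous_intros)
    qed
    have int0: "(\<lambda>s. exp s *\<^sub>R GG (ee n) (vv n) s x) integrable_on {0..t}"
      using integrable_continuous_real[OF cgx[OF cG0]] .
    have int1: "(\<lambda>s. exp s *\<^sub>R GG (ee (Suc n)) (vv (Suc n)) s x) integrable_on {0..t}"
      using integrable_continuous_real[OF cgx[OF cG1]] .
    have eqB: "vv (Suc (Suc n)) t x - vv (Suc n) t x = exp (-t) *\<^sub>R integral {0..t}
        (\<lambda>s. exp s *\<^sub>R GG (ee (Suc n)) (vv (Suc n)) s x - exp s *\<^sub>R GG (ee n) (vv n) s x)"
    proof -
      have v2: "vv (Suc (Suc n)) t x = exp (-t) *\<^sub>R (vh 0 x + integral {0..t} (\<lambda>s. exp s *\<^sub>R GG (ee (Suc n)) (vv (Suc n)) s x))"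
        using vv_Suc[of "Suc n" t x] t0(3) by simp
      have v1: "vv (Suc n) t x = exp (-t) *\<^sub>R (vh 0 x + integral {0..t} (\<lambda>s. exp s *\<^sub>R GG (ee n) (vv n) s x))"
        using vv_Suc[of n t x] t0(3) by simp
      show ?thesis unfolding v1 v2 integral_diff[OF int1 int0] by (simp add: algebra_simps)
    qed
    have pw: "norm (exp s *\<^sub>R GG (ee (Suc n)) (vv (Suc n)) s x - exp s *\<^sub>R GG (ee n) (vv n) s x)
        \<le> (exp t * L * 3 * c) * s^m" if s: "s \<in> {0..t}" for s
    proof -
      have sT: "s \<in> {0..T}" using s t0 by auto
      have "fd n s x \<le> c * s^m" using hyp sT x by auto
      then have d0: "norm (ee (Suc n) s x - ee n s x) \<le> c * s^m" unfolding fd_def by (smt (verit) norm_ge_zero)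
      have "norm (GG (ee (Suc n)) (vv (Suc n)) s x - GG (ee n) (vv n) s x) \<le> L * (c * s^m + c * s^m + c * s^m)"
        unfolding L_def
        by (rule G_diff[OF ce1[unfolded ST_def] ce0[unfolded ST_def] cv1[unfolded ST_def] cv0[unfolded ST_def]
              be1 be0 bv1 bv0 sT x sT x d0])
          (use delayed_bound[OF c hyp sT] closure_subset in auto)
      then have "norm (GG (ee (Suc n)) (vv (Suc n)) s x - GG (ee n) (vv n) s x) \<le> L * 3 * c * s^m"
        by (simp add: algebra_simps)
      moreover have "exp s \<le> exp t" using s by simp
      moreover have "L \<ge> 0" unfolding L_def using Lc_pos[OF BT_nn[OF T] Mv_nn] by simp
      ultimately have "exp s * norm (GG (ee (Suc n)) (vv (Suc n)) s x - GG (ee n) (vv n) s x) \<le> exp t * (L * 3 * c * s^m)"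
        using c s by (intro mult_mono) auto
      moreover have "norm (exp s *\<^sub>R GG (ee (Suc n)) (vv (Suc n)) s x - exp s *\<^sub>R GG (ee n) (vv n) s x)
          = exp s * norm (GG (ee (Suc n)) (vv (Suc n)) s x - GG (ee n) (vv n) s x)"
        by (simp add: scaleR_diff_right[symmetric])
      ultimately show ?thesis by (simp add: algebra_simps)
    qed
    have nB: "norm (vv (Suc (Suc n)) t x - vv (Suc n) t x) \<le> 3 * L * c * t^(Suc m) / Suc m"
    proof -
      have "norm (integral {0..t} (\<lambda>s. exp s *\<^sub>R GG (ee (Suc n)) (vv (Suc n)) s x - exp s *\<^sub>R GG (ee n) (vv n) s x))
          \<le> integral {0..t} (\<lambda>s. (exp t * L * 3 * c) * s^m)"
        by (rule integral_norm_bound_integral[OF integrable_diff[OF int1 int0] pow_integrable[OF t0(1)] pw])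
      also have "\<dots> = (exp t * L * 3 * c) * t^(Suc m) / Suc m" using pow_integral[OF t0(1)] by simp
      finally have A: "norm (integral {0..t} (\<lambda>s. exp s *\<^sub>R GG (ee (Suc n)) (vv (Suc n)) s x - exp s *\<^sub>R GG (ee n) (vv n) s x))
          \<le> (exp t * L * 3 * c) * t^(Suc m) / Suc m" .
      have "exp (-t) * norm (integral {0..t} (\<lambda>s. exp s *\<^sub>R GG (ee (Suc n)) (vv (Suc n)) s x - exp s *\<^sub>R GG (ee n) (vv n) s x))
          \<le> exp (-t) * ((exp t * L * 3 * c) * t^(Suc m) / Suc m)" using mult_left_mono[OF A, of "exp (-t)"] by simp
      also have "\<dots> = 3 * L * c * t^(Suc m) / Suc m" by (simp add: exp_minus field_simps)
      finally show ?thesis unfolding eqB by simp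
    qed
    have "fd (Suc n) t x \<le> c * t^(Suc m) / Suc m + 3 * L * c * t^(Suc m) / Suc m"
      unfolding fd_def using nA nB by simp
    also have "\<dots> = KT T * c * t^(Suc m) / Suc m" unfolding KT_def L_def add_divide_distrib[symmetric]
      by (simp only: algebra_simps mult_1)
    finally show ?thesis .
  qed
qed

lemma diff_bound:
  assumes T: "T \<ge> 0"
  shows "\<forall>t\<in>{0..T}. \<forall>x\<in>closure \<Omega>. fd n t x \<le> CT T * (KT T * t)^n / fact n"
proof (rule gronwall_iter[OF KT_nn[OF T]])
  show "CT T \<ge> 0" unfolding CT_def using BT_nn[OF T] Mv_nn by simp
  show "fd 0 t x \<le> CT T" if "t \<in> {0..T}" "x \<in> closure \<Omega>" for t x
  proof -
    have tt: "t \<in> {-\<tau>..T}" using that tau by auto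
    have "norm (ee 1 t x) \<le> BT T" "norm (ee 0 t x) \<le> BT T" "norm (vv 1 t x) \<le> Mv" "norm (vv 0 t x) \<le> Mv"
      using inv_it[OF T, of 1] inv_it[OF T, of 0] tt that by auto
    then show ?thesis unfolding fd_def CT_def
      using norm_triangle_ineq4[of "ee 1 t x" "ee 0 t x"] norm_triangle_ineq4[of "vv 1 t x" "vv 0 t x"] by simp
  qed
qed (use diff_step[OF T] in blast)

lemma diff_boundT:
  assumes T: "T \<ge> 0" and t: "t \<in> {-\<tau>..T}" and x: "x \<in> closure \<Omega>"
  shows "fd n t x \<le> CT T * (KT T * T)^n / fact n"
proof (cases "t \<le> 0")
  case True
  have "CT T \<ge> 0" unfolding CT_def using BT_nn[OF T] Mv_nn by simp
  then show ?thesis using fd_neg[OF True] KT_nn[OF T] T by simp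
next
  case False
  then have "t \<in> {0..T}" using t by auto
  then have "fd n t x \<le> CT T * (KT T * t)^n / fact n" using diff_bound[OF T] x by blast
  also have "\<dots> \<le> CT T * (KT T * T)^n / fact n"
    using False t KT_nn[OF T] BT_nn[OF T] Mv_nn unfolding CT_def
    by (intro divide_right_mono mult_left_mono power_mono mult_left_mono) auto
  finally show ?thesis .
qed

definition eL where "eL t x = ee 0 t x + (\<Sum>i. ee (Suc i) t x - ee i t x)"
definition vL where "vL t x = vv 0 t x + (\<Sum>i. vv (Suc i) t x - vv i t x)"

lemma unif_gen:
  fixes u :: "nat \<Rightarrow> real \<Rightarrow> 'a \<Rightarrow> 'a"
  assumes T: "T \<ge> 0"
    and b: "\<And>n t x. t \<in> {-\<tau>..T} \<Longrightarrow> x \<in> closure \<Omega> \<Longrightarrow> norm (u (Suc n) t x - u n t x) \<le> CT T * (KT T * T)^n / fact n"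
  shows "uniform_limit (ST T) (\<lambda>n (t, x). u n t x) (\<lambda>(t, x). u 0 t x + (\<Sum>i. u (Suc i) t x - u i t x)) sequentially"
proof -
  have UL: "uniform_limit (ST T) (\<lambda>n z. \<Sum>i<n. (\<lambda>i z. u (Suc i) (fst z) (snd z) - u i (fst z) (snd z)) i z)
      (\<lambda>z. \<Sum>i. (\<lambda>i z. u (Suc i) (fst z) (snd z) - u i (fst z) (snd z)) i z) sequentially"
  proof (rule Weierstrass_m_test)
    show "summable (\<lambda>n. CT T * (KT T * T)^n / fact n)" by (rule exp_series_summable)
    fix n z assume "z \<in> ST T"
    then show "norm (u (Suc n) (fst z) (snd z) - u n (fst z) (snd z)) \<le> CT T * (KT T * T)^n / fact n"
      unfolding ST_def using b by (cases z) auto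
  qed
  show ?thesis
  proof (rule uniform_limitI)
    fix e :: real assume e: "e > 0"
    show "\<forall>\<^sub>F n in sequentially. \<forall>z\<in>ST T. dist ((\<lambda>(t, x). u n t x) z) ((\<lambda>(t, x). u 0 t x + (\<Sum>i. u (Suc i) t x - u i t x)) z) < e"
      using uniform_limitD[OF UL e]
    proof (rule eventually_mono)
      fix n assume H: "\<forall>z\<in>ST T. dist (\<Sum>i<n. u (Suc i) (fst z) (snd z) - u i (fst z) (snd z))
          (\<Sum>i. u (Suc i) (fst z) (snd z) - u i (fst z) (snd z)) < e"
      show "\<forall>z\<in>ST T. dist ((\<lambda>(t, x). u n t x) z) ((\<lambda>(t, x). u 0 t x + (\<Sum>i. u (Suc i) t x - u i t x)) z) < e"
      proof
        fix z assume z: "z \<in> ST T"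
        obtain t x where tx: "z = (t, x)" by (cases z)
        have tel: "u n t x = u 0 t x + (\<Sum>i<n. u (Suc i) t x - u i t x)"
          using sum_lessThan_telescope[of "\<lambda>i. u i t x" n] by simp
        show "dist ((\<lambda>(t, x). u n t x) z) ((\<lambda>(t, x). u 0 t x + (\<Sum>i. u (Suc i) t x - u i t x)) z) < e"
          using H[rule_format, of "(t, x)"] z tx by (simp add: tel dist_add_cancel)
      qed
    qed
  qed
qed

lemma unif_e:
  assumes T: "T \<ge> 0"
  shows "uniform_limit (ST T) (\<lambda>n (t, x). ee n t x) (\<lambda>(t, x). eL t x) sequentially"
proof -
  have "uniform_limit (ST T) (\<lambda>n (t, x). ee n t x) (\<lambda>(t, x). ee 0 t x + (\<Sum>i. ee (Suc i) t x - ee i t x)) sequentially"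
    by (rule unif_gen[OF T]) (use diff_boundT[OF T] in \<open>unfold fd_def, smt (verit) norm_ge_zero\<close>)
  then show ?thesis unfolding eL_def .
qed

lemma unif_v:
  assumes T: "T \<ge> 0"
  shows "uniform_limit (ST T) (\<lambda>n (t, x). vv n t x) (\<lambda>(t, x). vL t x) sequentially"
proof -
  have "uniform_limit (ST T) (\<lambda>n (t, x). vv n t x) (\<lambda>(t, x). vv 0 t x + (\<Sum>i. vv (Suc i) t x - vv i t x)) sequentially"
    by (rule unif_gen[OF T]) (use diff_boundT[OF T] in \<open>unfold fd_def, smt (verit) norm_ge_zero\<close>)
  then show ?thesis unfolding vL_def .
qed

end


lemma uniform_limit_slice:
  assumes "uniform_limit (A \<times> B) (\<lambda>n (t, x). f n t x) (\<lambda>(t, x). g t x) F" "x \<in> B" "C \<subseteq> A"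
  shows "uniform_limit C (\<lambda>n t. f n t x) (\<lambda>t. g t x) F"
proof (rule uniform_limitI)
  fix e :: real assume e: "e > 0"
  show "\<forall>\<^sub>F n in F. \<forall>t\<in>C. dist (f n t x) (g t x) < e"
    using uniform_limitD[OF assms(1) e]
  proof (rule eventually_mono)
    fix n assume H: "\<forall>z\<in>A \<times> B. dist ((\<lambda>(t, x). f n t x) z) ((\<lambda>(t, x). g t x) z) < e"
    show "\<forall>t\<in>C. dist (f n t x) (g t x) < e"
    proof
      fix t assume "t \<in> C"
      then have "(t, x) \<in> A \<times> B" using assms by auto
      then show "dist (f n t x) (g t x) < e" using H by fastforce
    qed
  qed
qed

context hsetting begin

lemma cont_eL: "T \<ge> 0 \<Longrightarrow> continuous_on (ST T) (\<lambda>(t, x). eL t x)"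
  by (rule uniform_limit_theorem[OF _ unif_e]) (use inv_it in auto)

lemma cont_vL: "T \<ge> 0 \<Longrightarrow> continuous_on (ST T) (\<lambda>(t, x). vL t x)"
  by (rule uniform_limit_theorem[OF _ unif_v]) (use inv_it in auto)

lemma lim_e: "T \<ge> 0 \<Longrightarrow> t \<in> {-\<tau>..T} \<Longrightarrow> x \<in> closure \<Omega> \<Longrightarrow> (\<lambda>n. ee n t x) \<longlonglongrightarrow> eL t x"
  using tendsto_uniform_limitI[OF unif_e, of T "(t, x)"] unfolding ST_def by simp

lemma lim_v: "T \<ge> 0 \<Longrightarrow> t \<in> {-\<tau>..T} \<Longrightarrow> x \<in> closure \<Omega> \<Longrightarrow> (\<lambda>n. vv n t x) \<longlonglongrightarrow> vL t x"
  using tendsto_uniform_limitI[OF unif_v, of T "(t, x)"] unfolding ST_def by simp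

lemma bnd_L:
  assumes T: "T \<ge> 0" and t: "t \<in> {-\<tau>..T}" and x: "x \<in> closure \<Omega>"
  shows "norm (eL t x) \<le> BT T" "norm (vL t x) \<le> Mv"
proof -
  show "norm (eL t x) \<le> BT T"
    by (rule Lim_norm_ubound[OF _ lim_e[OF T t x]]) (use inv_it[OF T] t x in auto)
  show "norm (vL t x) \<le> Mv"
    by (rule Lim_norm_ubound[OF _ lim_v[OF T t x]]) (use inv_it[OF T] t x in auto)
qed

lemma hist_L: "t \<le> 0 \<Longrightarrow> eL t x = \<eta>h t x \<and> vL t x = vh t x"
  unfolding eL_def vL_def by (simp add: ee_neg vv_neg)

lemma eq_eL:
  assumes T: "T \<ge> 0" and t: "t \<in> {0..T}" and x: "x \<in> closure \<Omega>"
  shows "eL t x = \<eta>h 0 x + integral {0..t} (\<lambda>s. vL s x)"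
proof (cases "t \<le> 0")
  case True
  then have "t = 0" using t by auto
  then show ?thesis using hist_L[of 0 x] by simp
next
  case False
  have sub: "{0..t} \<subseteq> {-\<tau>..T}" using t tau by auto
  have ul: "uniform_limit {0..t} (\<lambda>n s. vv n s x) (\<lambda>s. vL s x) sequentially"
    using uniform_limit_slice[OF unif_v[OF T, unfolded ST_def] x sub] .
  have cn: "continuous_on {0..t} (\<lambda>s. vv n s x)" for n
    using slice_cont1[OF inv_it[OF T, of n, THEN conjunct2, THEN conjunct1, unfolded ST_def] x sub] .
  obtain I J where I: "\<And>n. ((\<lambda>s. vv n s x) has_integral I n) {0..t}"
    and J: "((\<lambda>s. vL s x) has_integral J) {0..t}" and IJ: "I \<longlonglongrightarrow> J"
    using uniform_limit_integral[OF ul cn] by auto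
  have "(\<lambda>n. ee (Suc n) t x) \<longlonglongrightarrow> eL t x"
    using LIMSEQ_Suc[OF lim_e[OF T _ x]] t tau by auto
  moreover have "ee (Suc n) t x = \<eta>h 0 x + I n" for n
    using False I[of n] unfolding ee_Suc by (simp add: integral_unique)
  ultimately have "(\<lambda>n. \<eta>h 0 x + I n) \<longlonglongrightarrow> eL t x" by simp
  moreover have "(\<lambda>n. \<eta>h 0 x + I n) \<longlonglongrightarrow> \<eta>h 0 x + J" by (intro tendsto_intros IJ)
  ultimately have "eL t x = \<eta>h 0 x + J" by (rule LIMSEQ_unique)
  then show ?thesis using J by (simp add: integral_unique)
qed

lemma GG_cont_L:
  assumes T: "T \<ge> 0"
  shows "continuous_on ({0..T} \<times> closure \<Omega>) (\<lambda>(s, x). GG eL vL s x)"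
  by (rule G_cont[OF cont_eL[OF T, unfolded ST_def] cont_vL[OF T, unfolded ST_def]
        bnd_L(1)[OF T] bnd_L(2)[OF T] BT_nn[OF T] Mv_nn])

lemma eq_vL:
  assumes T: "T \<ge> 0" and t: "t \<in> {0..T}" and x: "x \<in> closure \<Omega>"
  shows "vL t x = exp (-t) *\<^sub>R (vh 0 x + integral {0..t} (\<lambda>s. exp s *\<^sub>R GG eL vL s x))"
proof (cases "t \<le> 0")
  case True
  then have "t = 0" using t by auto
  then show ?thesis using hist_L[of 0 x] by simp
next
  case False
  have sub: "{0..t} \<subseteq> {0..T}" using t by auto
  define L where "L = Lc (BT T) Mv"
  have L0: "L > 0" unfolding L_def using Lc_pos[OF BT_nn[OF T] Mv_nn] .
  have ul: "uniform_limit {0..t} (\<lambda>n s. exp s *\<^sub>R GG (ee n) (vv n) s x) (\<lambda>s. exp s *\<^sub>R GG eL vL s x) sequentially"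
  proof (rule uniform_limitI)
    fix e :: real assume e: "e > 0"
    define e' where "e' = e / (exp T * (3 * L + 1))"
    have e': "e' > 0" unfolding e'_def using e L0 by simp
    show "\<forall>\<^sub>F n in sequentially. \<forall>s\<in>{0..t}. dist (exp s *\<^sub>R GG (ee n) (vv n) s x) (exp s *\<^sub>R GG eL vL s x) < e"
      using eventually_conj[OF uniform_limitD[OF unif_e[OF T] e'] uniform_limitD[OF unif_v[OF T] e']]
    proof (rule eventually_mono)
      fix n assume H: "(\<forall>z\<in>ST T. dist ((\<lambda>(t, x). ee n t x) z) ((\<lambda>(t, x). eL t x) z) < e') \<and>
          (\<forall>z\<in>ST T. dist ((\<lambda>(t, x). vv n t x) z) ((\<lambda>(t, x). vL t x) z) < e')"
      have He: "norm (ee n r y - eL r y) \<le> e'" if "r \<in> {-\<tau>..T}" "y \<in> closure \<Omega>" for r y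
      proof -
        have "(r, y) \<in> ST T" unfolding ST_def using that by auto
        then show ?thesis using H by (fastforce simp: dist_norm)
      qed
      have Hv: "norm (vv n r y - vL r y) \<le> e'" if "r \<in> {-\<tau>..T}" "y \<in> closure \<Omega>" for r y
      proof -
        have "(r, y) \<in> ST T" unfolding ST_def using that by auto
        then show ?thesis using H by (fastforce simp: dist_norm)
      qed
      show "\<forall>s\<in>{0..t}. dist (exp s *\<^sub>R GG (ee n) (vv n) s x) (exp s *\<^sub>R GG eL vL s x) < e"
      proof
        fix s assume s: "s \<in> {0..t}"
        then have sT: "s \<in> {0..T}" using t by auto
        have I: "continuous_on (ST T) (\<lambda>(t, x). ee n t x) \<and> continuous_on (ST T) (\<lambda>(t, x). vv n t x) \<and>
          (\<forall>t\<in>{-\<tau>..T}. \<forall>x\<in>closure \<Omega>. norm (ee n t x) \<le> BT T \<and> norm (vv n t x) \<le> Mv)"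
          using inv_it[OF T] .
        have "norm (GG (ee n) (vv n) s x - GG eL vL s x) \<le> L * (e' + e' + e')"
          unfolding L_def
        proof (rule G_diff[OF _ cont_eL[OF T, unfolded ST_def] _ cont_vL[OF T, unfolded ST_def]
              _ bnd_L(1)[OF T] _ bnd_L(2)[OF T] sT x sT x])
          show "continuous_on ({-\<tau>..T} \<times> closure \<Omega>) (\<lambda>(t, x). ee n t x)"
            "continuous_on ({-\<tau>..T} \<times> closure \<Omega>) (\<lambda>(t, x). vv n t x)"
            using I unfolding ST_def by auto
          show "\<And>t x. t \<in> {-\<tau>..T} \<Longrightarrow> x \<in> closure \<Omega> \<Longrightarrow> norm (ee n t x) \<le> BT T"
            "\<And>t x. t \<in> {-\<tau>..T} \<Longrightarrow> x \<in> closure \<Omega> \<Longrightarrow> norm (vv n t x) \<le> Mv"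
            using I by auto
          show "norm (ee n s x - eL s x) \<le> e'" using He sT x tau by auto
          show "\<And>y. y \<in> \<Omega> \<Longrightarrow> norm (ee n (s - \<tau>) y - eL (s - \<tau>) y) \<le> e'"
            using sT tau by (auto intro!: He closure_subset[THEN subsetD])
          show "\<And>y. y \<in> \<Omega> \<Longrightarrow> norm (vv n (s - \<tau>) y - vL (s - \<tau>) y) \<le> e'"
            using sT tau by (auto intro!: Hv closure_subset[THEN subsetD])
        qed
        then have "exp s * norm (GG (ee n) (vv n) s x - GG eL vL s x) \<le> exp T * (L * (3 * e'))"
          using sT L0 e' by (intro mult_mono) auto
        also have "\<dots> < e"
        proof -
          have pos: "exp T * (3 * L + 1) > 0" using L0 by simp
          have ee': "e' * (exp T * (3 * L + 1)) = e" unfolding e'_def using pos L0 by simp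
          have "exp T * (L * (3 * e')) * (3 * L + 1) = (3 * L) * (e' * (exp T * (3 * L + 1)))"
            by (simp add: algebra_simps)
          also have "\<dots> = e * (3 * L)" using ee' by simp
          finally have "exp T * (L * (3 * e')) * (3 * L + 1) = e * (3 * L)" .
          then have "exp T * (L * (3 * e')) = e * (3 * L) / (3 * L + 1)"
            using L0 by (simp add: eq_divide_eq)
          also have "\<dots> < e" using e L0 by (simp add: divide_less_eq)
          finally show ?thesis .
        qed
        finally show "dist (exp s *\<^sub>R GG (ee n) (vv n) s x) (exp s *\<^sub>R GG eL vL s x) < e"
          by (simp add: dist_norm scaleR_diff_right[symmetric])
      qed
    qed
  qed
  have cn: "continuous_on {0..t} (\<lambda>s. exp s *\<^sub>R GG (ee n) (vv n) s x)" for n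
  proof -
    have I: "continuous_on (ST T) (\<lambda>(t, x). ee n t x) \<and> continuous_on (ST T) (\<lambda>(t, x). vv n t x) \<and>
      (\<forall>t\<in>{-\<tau>..T}. \<forall>x\<in>closure \<Omega>. norm (ee n t x) \<le> BT T \<and> norm (vv n t x) \<le> Mv)"
      using inv_it[OF T] .
    have "continuous_on ({0..T} \<times> closure \<Omega>) (\<lambda>(s, x). GG (ee n) (vv n) s x)"
      by (rule G_cont[OF _ _ _ _ BT_nn[OF T] Mv_nn]) (use I in \<open>auto simp: ST_def\<close>)
    then have "continuous_on {0..t} (\<lambda>s. GG (ee n) (vv n) s x)"
      using slice_cont1[OF _ x sub] by blast
    then show ?thesis by (intro continuous_intros)
  qed
  obtain I J where I: "\<And>n. ((\<lambda>s. exp s *\<^sub>R GG (ee n) (vv n) s x) has_integral I n) {0..t}"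
    and J: "((\<lambda>s. exp s *\<^sub>R GG eL vL s x) has_integral J) {0..t}" and IJ: "I \<longlonglongrightarrow> J"
    using uniform_limit_integral[OF ul cn] by auto
  have "(\<lambda>n. vv (Suc n) t x) \<longlonglongrightarrow> vL t x"
    using LIMSEQ_Suc[OF lim_v[OF T _ x]] t tau by auto
  moreover have "vv (Suc n) t x = exp (-t) *\<^sub>R (vh 0 x + I n)" for n
    using False I[of n] vv_Suc[of n t x] by (simp add: integral_unique)
  ultimately have "(\<lambda>n. exp (-t) *\<^sub>R (vh 0 x + I n)) \<longlonglongrightarrow> vL t x" by simp
  moreover have "(\<lambda>n. exp (-t) *\<^sub>R (vh 0 x + I n)) \<longlonglongrightarrow> exp (-t) *\<^sub>R (vh 0 x + J)" by (intro tendsto_intros IJ)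
  ultimately have "vL t x = exp (-t) *\<^sub>R (vh 0 x + J)" by (rule LIMSEQ_unique)
  then show ?thesis using J by (simp add: integral_unique)
qed

end


lemma cont_on_Ici:
  fixes f :: "real \<times> 'b::metric_space \<Rightarrow> 'c::topological_space"
  assumes "\<And>T. T \<ge> 0 \<Longrightarrow> continuous_on ({a..T} \<times> K) f" and a: "a \<le> 0"
  shows "continuous_on ({0..} \<times> K) f"
proof (rule continuous_on_eq_continuous_within[THEN iffD2], rule ballI)
  fix z :: "real \<times> 'b" assume z: "z \<in> {0..} \<times> K"
  obtain t x where tx: "z = (t, x)" "t \<ge> 0" "x \<in> K" using z by auto
  have c: "continuous (at z within {a..t+1} \<times> K) f"
    using assms(1)[of "t+1"] tx a unfolding continuous_on_eq_continuous_within by auto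
  have "at z within ({0..} \<times> K) = at z within ({0..t+1} \<times> K)"
  proof (rule at_within_nhd[of _ "{..<t+1} \<times> UNIV"])
    show "z \<in> {..<t+1} \<times> UNIV" using tx by auto
    show "open ({..<t + 1} \<times> (UNIV :: 'b set))" by (intro open_Times) auto
    show "{0..} \<times> K \<inter> {..<t + 1} \<times> UNIV - {z} = {0..t + 1} \<times> K \<inter> {..<t + 1} \<times> UNIV - {z}"
      by auto
  qed
  moreover have "continuous (at z within {0..t+1} \<times> K) f"
    by (rule continuous_within_subset[OF c]) (use a in auto)
  ultimately show "continuous (at z within {0..} \<times> K) f" by simp
qed

context hsetting begin

lemma eL_diff:
  assumes T: "T \<ge> 0" and uw: "0 \<le> u" "u \<le> w" "w \<le> T" and x: "x \<in> closure \<Omega>"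
  shows "eL w x - eL u x = integral {u..w} (\<lambda>r. vL r x)"
proof -
  have sub: "{0..T} \<subseteq> {-\<tau>..T}" using tau by auto
  have cv: "continuous_on {0..T} (\<lambda>r. vL r x)"
    using slice_cont1[OF cont_eL[OF T, unfolded ST_def] x sub] slice_cont1[OF cont_vL[OF T, unfolded ST_def] x sub] by auto
  have iw: "(\<lambda>r. vL r x) integrable_on {0..w}"
    using integrable_continuous_real[OF continuous_on_subset[OF cv]] uw by auto
  have "integral {0..u} (\<lambda>r. vL r x) + integral {u..w} (\<lambda>r. vL r x) = integral {0..w} (\<lambda>r. vL r x)"
    by (rule Henstock_Kurzweil_Integration.integral_combine[OF uw(1,2) iw])
  moreover have "eL w x = \<eta>h 0 x + integral {0..w} (\<lambda>s. vL s x)" using eq_eL[OF T _ x] uw by auto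
  moreover have "eL u x = \<eta>h 0 x + integral {0..u} (\<lambda>s. vL s x)" using eq_eL[OF T _ x] uw by auto
  ultimately show ?thesis by (simp add: algebra_simps)
qed

lemma eL_deriv:
  assumes t: "t \<ge> 0" and e: "e > 0"
  shows "\<exists>\<delta>>0. \<forall>s\<ge>0. \<bar>s - t\<bar> < \<delta> \<longrightarrow>
        (\<forall>x\<in>closure \<Omega>. norm (eL s x - eL t x - (s - t) *\<^sub>R vL t x) \<le> e * \<bar>s - t\<bar>)"
proof -
  define T where "T = t + 1"
  have T: "T \<ge> 0" using t unfolding T_def by simp
  have cmp: "compact (ST T)" unfolding ST_def by (intro compact_Times compact_Icc cl_compact)
  have uc: "uniformly_continuous_on (ST T) (\<lambda>(t, x). vL t x)"
    using compact_uniformly_continuous[OF cont_vL[OF T] cmp] .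
  obtain d where d: "d > 0" "\<forall>z\<in>ST T. \<forall>z'\<in>ST T. dist z' z < d \<longrightarrow> dist ((\<lambda>(t, x). vL t x) z') ((\<lambda>(t, x). vL t x) z) < e"
    using uc[unfolded uniformly_continuous_on_def] e by metis
  have key: "norm (integral {u..w} (\<lambda>r. vL r x - vL t x)) \<le> e * (w - u)"
    if uw: "0 \<le> u" "u \<le> w" "w \<le> T" "t \<in> {u..w}" "w - u < d" and x: "x \<in> closure \<Omega>" for u w x
  proof -
    have sub: "{u..w} \<subseteq> {-\<tau>..T}" using uw tau by auto
    have cv: "continuous_on {u..w} (\<lambda>r. vL r x)"
      using slice_cont1[OF cont_vL[OF T, unfolded ST_def] x sub] .
    have "norm (integral {u..w} (\<lambda>r. vL r x - vL t x)) \<le> integral {u..w} (\<lambda>r. e)"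
    proof (rule integral_norm_bound_integral)
      show "(\<lambda>r. vL r x - vL t x) integrable_on {u..w}"
        by (intro integrable_continuous_real continuous_intros cv)
      fix r assume r: "r \<in> {u..w}"
      have m: "(r, x) \<in> ST T" "(t, x) \<in> ST T" unfolding ST_def using r uw x tau by auto
      have "\<bar>r - t\<bar> < d" using r uw by (auto simp: abs_less_iff)
      then have "dist (r, x) (t, x) < d" by (simp add: dist_Pair_Pair dist_real_def)
      then show "norm (vL r x - vL t x) \<le> e"
        using d(2)[rule_format, OF m(2) m(1)] by (simp add: dist_norm)
    qed auto
    then show ?thesis using uw by (simp add: mult.commute)
  qed
  show ?thesis
  proof (intro exI[of _ "min d 1"] conjI allI impI ballI)
    show "min d 1 > 0" using d by simp
    fix s x assume s: "s \<ge> 0" and st: "\<bar>s - t\<bar> < min d 1" and x: "x \<in> closure \<Omega>"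
    have sT: "s \<le> T" using st unfolding T_def by auto
    have tT: "t \<le> T" unfolding T_def by simp
    show "norm (eL s x - eL t x - (s - t) *\<^sub>R vL t x) \<le> e * \<bar>s - t\<bar>"
    proof (cases "t \<le> s")
      case True
      have "{t..s} \<subseteq> {-\<tau>..T}" using True sT t tau by auto
      then have i1: "(\<lambda>r. vL r x) integrable_on {t..s}"
        using integrable_continuous_real[OF slice_cont1[OF cont_vL[OF T, unfolded ST_def] x]] by blast
      have "eL s x - eL t x - (s - t) *\<^sub>R vL t x = integral {t..s} (\<lambda>r. vL r x - vL t x)"
        using eL_diff[OF T t True sT x] integral_diff[OF i1 integrable_const_ivl] True by simp
      then show ?thesis using key[OF t True sT _ _ x] st True by simp
    next
      case False
      have "{s..t} \<subseteq> {-\<tau>..T}" using False tT s tau by auto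
      then have i1: "(\<lambda>r. vL r x) integrable_on {s..t}"
        using integrable_continuous_real[OF slice_cont1[OF cont_vL[OF T, unfolded ST_def] x]] by blast
      have "eL s x - eL t x - (s - t) *\<^sub>R vL t x = - integral {s..t} (\<lambda>r. vL r x - vL t x)"
        using eL_diff[OF T s _ tT x] integral_diff[OF i1 integrable_const_ivl] False by (simp add: algebra_simps)
      then show ?thesis using key[OF s _ tT _ _ x] st False by simp
    qed
  qed
qed

lemma vL_deriv:
  assumes x: "x \<in> \<Omega>" and t: "t > 0"
  shows "((\<lambda>s. vL s x) has_vector_derivative (GG eL vL t x - vL t x)) (at t)"
proof -
  define T where "T = t + 1"
  have T: "T \<ge> 0" using t unfolding T_def by simp
  have xc: "x \<in> closure \<Omega>" using x closure_subset by auto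
  define g where "g = (\<lambda>s. exp s *\<^sub>R GG eL vL s x)"
  have cg: "continuous_on {0..T} g"
  proof -
    have "continuous_on {0..T} (\<lambda>s. GG eL vL s x)"
      using slice_cont1[OF GG_cont_L[OF T] xc order_refl] .
    then show ?thesis unfolding g_def by (intro continuous_intros)
  qed
  define h where "h = (\<lambda>s. exp (-s) *\<^sub>R (vh 0 x + integral {0..s} g))"
  have tT: "t \<in> {0..T}" using t unfolding T_def by simp
  have "(h has_vector_derivative (exp (-t) *\<^sub>R g t + (- exp (-t)) *\<^sub>R (vh 0 x + integral {0..t} g))) (at t within {0..T})"
    unfolding h_def
  proof (rule has_vector_derivative_scaleR)
    show "((\<lambda>s. exp (-s)) has_field_derivative - exp (-t)) (at t within {0..T})"
      by (auto intro!: derivative_eq_intros)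
    show "((\<lambda>s. vh 0 x + integral {0..s} g) has_vector_derivative g t) (at t within {0..T})"
      using integral_has_vector_derivative[OF cg tT] by (auto intro!: derivative_eq_intros)
  qed
  moreover have "exp (-t) *\<^sub>R g t + (- exp (-t)) *\<^sub>R (vh 0 x + integral {0..t} g) = GG eL vL t x - vL t x"
    using eq_vL[OF T tT xc] unfolding g_def by (simp add: exp_minus field_simps)
  ultimately have d: "(h has_vector_derivative (GG eL vL t x - vL t x)) (at t within {0..T})" by simp
  have "t \<in> interior {0..T}" using t unfolding T_def by simp
  then have dh: "(h has_vector_derivative (GG eL vL t x - vL t x)) (at t)"
    using d at_within_interior by metis
  show ?thesis
  proof (rule has_vector_derivative_transform_within_open[OF dh, of "{0<..<T}"])
    show "open {0<..<T}" by simp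
    show "t \<in> {0<..<T}" using t unfolding T_def by simp
    fix s assume s: "s \<in> {0<..<T}"
    then show "h s = vL s x" unfolding h_def g_def using eq_vL[OF T _ xc, of s] by simp
  qed
qed

lemma GG_align: "GG eL vL t x - vL t x = align_rhs \<tau> \<Omega> \<rho> \<psi> eL vL t x"
  unfolding GG_def Gf_def D_def N_def W_def[abs_def] align_rhs_def by simp

lemma existence:
  "is_solution_L \<tau> \<Omega> \<rho> \<psi> \<eta>h vh eL vL \<and> (\<forall>t\<ge>0. \<forall>x\<in>\<Omega>. norm (vL t x) \<le> Mv)"
  unfolding is_solution_L_def
proof (intro conjI ballI allI impI)
  show "eL s x = \<eta>h s x" "vL s x = vh s x" if "s \<in> {-\<tau>..0}" for s x using hist_L that by auto
  show "continuous_on ({0..} \<times> closure \<Omega>) (\<lambda>(t, x). eL t x)"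
    by (rule cont_on_Ici[of "-\<tau>"]) (use cont_eL tau in \<open>auto simp: ST_def\<close>)
  show "continuous_on ({0..} \<times> closure \<Omega>) (\<lambda>(t, x). vL t x)"
    by (rule cont_on_Ici[of "-\<tau>"]) (use cont_vL tau in \<open>auto simp: ST_def\<close>)
  show "\<exists>\<delta>>0. \<forall>s\<ge>0. \<bar>s - t\<bar> < \<delta> \<longrightarrow> (\<forall>x\<in>closure \<Omega>. norm (eL s x - eL t x - (s - t) *\<^sub>R vL t x) \<le> e * \<bar>s - t\<bar>)"
    if "t \<ge> 0" "e > 0" for t e using eL_deriv that by blast
  show "((\<lambda>s. vL s x) has_vector_derivative align_rhs \<tau> \<Omega> \<rho> \<psi> eL vL t x) (at t)"
    if "x \<in> \<Omega>" "t > 0" for x t using vL_deriv[OF that] GG_align by simp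
  show "norm (vL t x) \<le> Mv" if "t \<ge> 0" "x \<in> \<Omega>" for t x
    using bnd_L(2)[of t t x] that closure_subset tau by auto
qed

end


context hsetting begin

lemma GG_align_gen: "GG e v t x - v t x = align_rhs \<tau> \<Omega> \<rho> \<psi> e v t x"
  unfolding GG_def Gf_def D_def N_def W_def[abs_def] align_rhs_def by simp

lemma sol_cont:
  assumes S: "is_solution_L \<tau> \<Omega> \<rho> \<psi> \<eta>h vh \<eta> v" and T: "T \<ge> 0"
  shows "continuous_on ({-\<tau>..T} \<times> closure \<Omega>) (\<lambda>(t, x). \<eta> t x)"
    "continuous_on ({-\<tau>..T} \<times> closure \<Omega>) (\<lambda>(t, x). v t x)"
proof -
  have h: "\<forall>s\<in>{-\<tau>..0}. \<forall>x\<in>closure \<Omega>. \<eta> s x = \<eta>h s x \<and> v s x = vh s x"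
    and c1: "continuous_on ({0..} \<times> closure \<Omega>) (\<lambda>(t, x). \<eta> t x)"
    and c2: "continuous_on ({0..} \<times> closure \<Omega>) (\<lambda>(t, x). v t x)"
    using S unfolding is_solution_L_def by auto
  have sub: "{0..T} \<times> closure \<Omega> \<subseteq> {0..} \<times> closure \<Omega>" by auto
  have g1: "continuous_on ({-\<tau>..T} \<times> closure \<Omega>) (\<lambda>(t, x). if t \<le> 0 then \<eta>h t x else \<eta> t x)"
    by (rule cont_glue[OF T closed_closure hcE continuous_on_subset[OF c1 sub]]) (use h tau in auto)
  have g2: "continuous_on ({-\<tau>..T} \<times> closure \<Omega>) (\<lambda>(t, x). if t \<le> 0 then vh t x else v t x)"
    by (rule cont_glue[OF T closed_closure hcV continuous_on_subset[OF c2 sub]]) (use h tau in auto)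
  show "continuous_on ({-\<tau>..T} \<times> closure \<Omega>) (\<lambda>(t, x). \<eta> t x)"
    by (rule continuous_on_eq[OF g1]) (use h in auto)
  show "continuous_on ({-\<tau>..T} \<times> closure \<Omega>) (\<lambda>(t, x). v t x)"
    by (rule continuous_on_eq[OF g2]) (use h in auto)
qed

lemma sol_bounds:
  assumes S: "is_solution_L \<tau> \<Omega> \<rho> \<psi> \<eta>h vh \<eta> v" and T: "T \<ge> 0"
  obtains B M where "B \<ge> 0" "M \<ge> 0"
    "\<And>t x. t \<in> {-\<tau>..T} \<Longrightarrow> x \<in> closure \<Omega> \<Longrightarrow> norm (\<eta> t x) \<le> B"
    "\<And>t x. t \<in> {-\<tau>..T} \<Longrightarrow> x \<in> closure \<Omega> \<Longrightarrow> norm (v t x) \<le> M"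
proof -
  have cmp: "compact ({-\<tau>..T} \<times> closure \<Omega>)" by (intro compact_Times compact_Icc cl_compact)
  have "bounded ((\<lambda>(t, x). \<eta> t x) ` ({-\<tau>..T} \<times> closure \<Omega>))"
    using compact_imp_bounded[OF compact_continuous_image[OF sol_cont(1)[OF S T] cmp]] .
  then obtain B where B: "\<forall>w\<in>(\<lambda>(t, x). \<eta> t x) ` ({-\<tau>..T} \<times> closure \<Omega>). norm w \<le> B"
    unfolding bounded_iff by blast
  have "bounded ((\<lambda>(t, x). v t x) ` ({-\<tau>..T} \<times> closure \<Omega>))"
    using compact_imp_bounded[OF compact_continuous_image[OF sol_cont(2)[OF S T] cmp]] .
  then obtain M where M: "\<forall>w\<in>(\<lambda>(t, x). v t x) ` ({-\<tau>..T} \<times> closure \<Omega>). norm w \<le> M"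
    unfolding bounded_iff by blast
  have b1: "norm (\<eta> t x) \<le> max B 0" if "t \<in> {-\<tau>..T}" "x \<in> closure \<Omega>" for t x
  proof -
    have "(t, x) \<in> {-\<tau>..T} \<times> closure \<Omega>" using that by simp
    then have "norm (\<eta> t x) \<le> B" using B by fastforce
    then show ?thesis by simp
  qed
  have b2: "norm (v t x) \<le> max M 0" if "t \<in> {-\<tau>..T}" "x \<in> closure \<Omega>" for t x
  proof -
    have "(t, x) \<in> {-\<tau>..T} \<times> closure \<Omega>" using that by simp
    then have "norm (v t x) \<le> M" using M by fastforce
    then show ?thesis by simp
  qed
  show ?thesis by (rule that[of "max B 0" "max M 0"]) (use b1 b2 in auto)
qed

lemma sol_eta_int:
  assumes S: "is_solution_L \<tau> \<Omega> \<rho> \<psi> \<eta>h vh \<eta> v" and t: "t \<ge> 0" and x: "x \<in> closure \<Omega>"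
  shows "((\<lambda>s. v s x) has_integral (\<eta> t x - \<eta> 0 x)) {0..t}"
proof (rule fundamental_theorem_of_calculus[OF t])
  fix s assume s: "s \<in> {0..t}"
  have D: "\<forall>e>0. \<exists>\<delta>>0. \<forall>s'\<ge>0. \<bar>s' - s\<bar> < \<delta> \<longrightarrow>
        (\<forall>x\<in>closure \<Omega>. norm (\<eta> s' x - \<eta> s x - (s' - s) *\<^sub>R v s x) \<le> e * \<bar>s' - s\<bar>)"
    using S s unfolding is_solution_L_def by auto
  show "((\<lambda>r. \<eta> r x) has_vector_derivative v s x) (at s within {0..t})"
    unfolding has_vector_derivative_def has_derivative_within_alt
  proof (intro conjI allI impI)
    show "bounded_linear (\<lambda>h. h *\<^sub>R v s x)" by (rule bounded_linear_scaleR_left)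
    fix e :: real assume e: "e > 0"
    obtain \<delta> where \<delta>: "\<delta> > 0" "\<forall>s'\<ge>0. \<bar>s' - s\<bar> < \<delta> \<longrightarrow>
        (\<forall>x\<in>closure \<Omega>. norm (\<eta> s' x - \<eta> s x - (s' - s) *\<^sub>R v s x) \<le> e * \<bar>s' - s\<bar>)"
      using D e by blast
    show "\<exists>d>0. \<forall>y\<in>{0..t}. norm (y - s) < d \<longrightarrow> norm (\<eta> y x - \<eta> s x - (y - s) *\<^sub>R v s x) \<le> e * norm (y - s)"
      using \<delta> x by (intro exI[of _ \<delta>]) auto
  qed
qed

lemma sol_v_int:
  assumes S: "is_solution_L \<tau> \<Omega> \<rho> \<psi> \<eta>h vh \<eta> v" and t: "t \<ge> 0" and x: "x \<in> \<Omega>"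
  shows "((\<lambda>s. GG \<eta> v s x - v s x) has_integral (v t x - v 0 x)) {0..t}"
proof (rule fundamental_theorem_of_calculus_interior[OF t])
  have xc: "x \<in> closure \<Omega>" using x closure_subset by auto
  have "continuous_on ({0..} \<times> closure \<Omega>) (\<lambda>(t, x). v t x)"
    using S unfolding is_solution_L_def by auto
  then show "continuous_on {0..t} (\<lambda>s. v s x)"
    by (rule slice_cont1[OF _ xc]) auto
  fix s assume s: "s \<in> {0<..<t}"
  then show "((\<lambda>s. v s x) has_vector_derivative GG \<eta> v s x - v s x) (at s)"
    using S x unfolding is_solution_L_def GG_align_gen by auto
qed

lemma uniq_T:
  assumes S1: "is_solution_L \<tau> \<Omega> \<rho> \<psi> \<eta>h vh \<eta>1 v1" and S2: "is_solution_L \<tau> \<Omega> \<rho> \<psi> \<eta>h vh \<eta>2 v2"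
    and T: "T \<ge> 0" and t: "t \<in> {0..T}" and x: "x \<in> \<Omega>"
  shows "\<eta>1 t x = \<eta>2 t x \<and> v1 t x = v2 t x"
proof -
  obtain B1 M1 where B1: "B1 \<ge> 0" "M1 \<ge> 0"
    "\<And>t x. t \<in> {-\<tau>..T} \<Longrightarrow> x \<in> closure \<Omega> \<Longrightarrow> norm (\<eta>1 t x) \<le> B1"
    "\<And>t x. t \<in> {-\<tau>..T} \<Longrightarrow> x \<in> closure \<Omega> \<Longrightarrow> norm (v1 t x) \<le> M1"
    using sol_bounds[OF S1 T] by blast
  obtain B2 M2 where B2: "B2 \<ge> 0" "M2 \<ge> 0"
    "\<And>t x. t \<in> {-\<tau>..T} \<Longrightarrow> x \<in> closure \<Omega> \<Longrightarrow> norm (\<eta>2 t x) \<le> B2"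
    "\<And>t x. t \<in> {-\<tau>..T} \<Longrightarrow> x \<in> closure \<Omega> \<Longrightarrow> norm (v2 t x) \<le> M2"
    using sol_bounds[OF S2 T] by blast
  define B where "B = max B1 B2"
  define M where "M = max M1 M2"
  have B0: "B \<ge> 0" and M0: "M \<ge> 0" unfolding B_def M_def using B1 B2 by auto
  have bE1: "\<And>t x. t \<in> {-\<tau>..T} \<Longrightarrow> x \<in> closure \<Omega> \<Longrightarrow> norm (\<eta>1 t x) \<le> B"
    and bE2: "\<And>t x. t \<in> {-\<tau>..T} \<Longrightarrow> x \<in> closure \<Omega> \<Longrightarrow> norm (\<eta>2 t x) \<le> B"
    and bV1: "\<And>t x. t \<in> {-\<tau>..T} \<Longrightarrow> x \<in> closure \<Omega> \<Longrightarrow> norm (v1 t x) \<le> M"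
    and bV2: "\<And>t x. t \<in> {-\<tau>..T} \<Longrightarrow> x \<in> closure \<Omega> \<Longrightarrow> norm (v2 t x) \<le> M"
    unfolding B_def M_def
    using B1(3) B2(3) B1(4) B2(4) by (meson le_max_iff_disj)+
  note c1 = sol_cont[OF S1 T] and c2 = sol_cont[OF S2 T]
  have h1: "\<forall>s\<in>{-\<tau>..0}. \<forall>x\<in>closure \<Omega>. \<eta>1 s x = \<eta>h s x \<and> v1 s x = vh s x"
    using S1 unfolding is_solution_L_def by auto
  have h2: "\<forall>s\<in>{-\<tau>..0}. \<forall>x\<in>closure \<Omega>. \<eta>2 s x = \<eta>h s x \<and> v2 s x = vh s x"
    using S2 unfolding is_solution_L_def by auto
  define L where "L = Lc B M"
  have L0: "L > 0" unfolding L_def using Lc_pos[OF B0 M0] .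
  define f where "f = (\<lambda>(n::nat) t x. norm (\<eta>1 t x - \<eta>2 t x) + norm (v1 t x - v2 t x))"
  have hist_eq: "\<eta>1 s y = \<eta>2 s y \<and> v1 s y = v2 s y" if "s \<in> {-\<tau>..0}" "y \<in> closure \<Omega>" for s y
    using h1 h2 that by auto
  have G: "\<forall>t\<in>{0..T}. \<forall>x\<in>\<Omega>. f n t x \<le> (2 * B + 2 * M) * ((2 + 3 * L) * t)^n / fact n" for n
  proof (rule gronwall_iter)
    show "2 + 3 * L \<ge> 0" "2 * B + 2 * M \<ge> 0" using L0 B0 M0 by auto
    show "f 0 t x \<le> 2 * B + 2 * M" if "t \<in> {0..T}" "x \<in> \<Omega>" for t x
    proof -
      have tt: "t \<in> {-\<tau>..T}" and xc: "x \<in> closure \<Omega>" using that tau closure_subset by auto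
      show ?thesis unfolding f_def
        using bE1[OF tt xc] bE2[OF tt xc] bV1[OF tt xc] bV2[OF tt xc]
          norm_triangle_ineq4[of "\<eta>1 t x" "\<eta>2 t x"] norm_triangle_ineq4[of "v1 t x" "v2 t x"] by simp
    qed
    fix k c m assume c: "c \<ge> 0" and hyp: "\<forall>s\<in>{0..T}. \<forall>y\<in>\<Omega>. f k s y \<le> c * s^m"
    have dl: "norm (\<eta>1 (s - \<tau>) y - \<eta>2 (s - \<tau>) y) \<le> c * s^m \<and> norm (v1 (s - \<tau>) y - v2 (s - \<tau>) y) \<le> c * s^m"
      if s: "s \<in> {0..T}" and y: "y \<in> \<Omega>" for s y
    proof (cases "s - \<tau> \<le> 0")
      case True
      have "s - \<tau> \<in> {-\<tau>..0}" "y \<in> closure \<Omega>" using True s y closure_subset by auto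
      then show ?thesis using hist_eq c s by simp
    next
      case False
      then have s': "s - \<tau> \<in> {0..T}" using s tau by auto
      have "f k (s - \<tau>) y \<le> c * (s - \<tau>)^m" using hyp s' y by blast
      also have "\<dots> \<le> c * s^m" using False tau c by (intro mult_left_mono power_mono) auto
      finally show ?thesis unfolding f_def by (smt (verit) norm_ge_zero)
    qed
    show "\<forall>t\<in>{0..T}. \<forall>x\<in>\<Omega>. f (Suc k) t x \<le> (2 + 3 * L) * c * t^(Suc m) / Suc m"
    proof (intro ballI)
      fix t x assume t: "t \<in> {0..T}" and x: "x \<in> \<Omega>"
      have t0: "t \<ge> 0" using t by auto
      have xc: "x \<in> closure \<Omega>" using x closure_subset by auto
      have e10: "\<eta>1 0 x = \<eta>2 0 x" and v10: "v1 0 x = v2 0 x" using hist_eq[of 0 x] xc tau by auto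
      have I1: "((\<lambda>s. v1 s x - v2 s x) has_integral (\<eta>1 t x - \<eta>2 t x)) {0..t}"
        using has_integral_diff[OF sol_eta_int[OF S1 t0 xc] sol_eta_int[OF S2 t0 xc]] e10 by simp
      have pwv: "norm (v1 s x - v2 s x) \<le> c * s^m" if "s \<in> {0..t}" for s
      proof -
        have "f k s x \<le> c * s^m" using hyp that t x by auto
        then show ?thesis unfolding f_def by (smt (verit) norm_ge_zero)
      qed
      have nA: "norm (\<eta>1 t x - \<eta>2 t x) \<le> c * t^(Suc m) / Suc m"
      proof -
        have "norm (integral {0..t} (\<lambda>s. v1 s x - v2 s x)) \<le> integral {0..t} (\<lambda>s. c * s^m)"
          by (rule integral_norm_bound_integral[OF has_integral_integrable[OF I1] pow_integrable[OF t0] pwv])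
        then show ?thesis using integral_unique[OF I1] pow_integral[OF t0] by simp
      qed
      have I2: "((\<lambda>s. (GG \<eta>1 v1 s x - v1 s x) - (GG \<eta>2 v2 s x - v2 s x)) has_integral (v1 t x - v2 t x)) {0..t}"
        using has_integral_diff[OF sol_v_int[OF S1 t0 x] sol_v_int[OF S2 t0 x]] v10 by simp
      have pw: "norm ((GG \<eta>1 v1 s x - v1 s x) - (GG \<eta>2 v2 s x - v2 s x)) \<le> (3 * L + 1) * c * s^m"
        if s: "s \<in> {0..t}" for s
      proof -
        have sT: "s \<in> {0..T}" using s t by auto
        have "f k s x \<le> c * s^m" using hyp sT x by auto
        then have d0: "norm (\<eta>1 s x - \<eta>2 s x) \<le> c * s^m" and dv: "norm (v1 s x - v2 s x) \<le> c * s^m"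
          unfolding f_def by (smt (verit) norm_ge_zero)+
        have "norm (GG \<eta>1 v1 s x - GG \<eta>2 v2 s x) \<le> L * (c * s^m + c * s^m + c * s^m)"
          unfolding L_def
          by (rule G_diff[OF c1(1) c2(1) c1(2) c2(2) bE1 bE2 bV1 bV2 sT xc sT xc d0])
            (use dl[OF sT] in auto)
        then have "norm (GG \<eta>1 v1 s x - GG \<eta>2 v2 s x) \<le> 3 * L * c * s^m" by (simp add: algebra_simps)
        moreover have "norm ((GG \<eta>1 v1 s x - v1 s x) - (GG \<eta>2 v2 s x - v2 s x))
            \<le> norm (GG \<eta>1 v1 s x - GG \<eta>2 v2 s x) + norm (v1 s x - v2 s x)"
        proof -
          have "(GG \<eta>1 v1 s x - v1 s x) - (GG \<eta>2 v2 s x - v2 s x) = (GG \<eta>1 v1 s x - GG \<eta>2 v2 s x) - (v1 s x - v2 s x)"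
            by (simp add: algebra_simps)
          then show ?thesis using norm_triangle_ineq4 by metis
        qed
        ultimately show ?thesis using dv by (simp add: algebra_simps)
      qed
      have nB: "norm (v1 t x - v2 t x) \<le> (3 * L + 1) * c * t^(Suc m) / Suc m"
      proof -
        have "norm (integral {0..t} (\<lambda>s. (GG \<eta>1 v1 s x - v1 s x) - (GG \<eta>2 v2 s x - v2 s x)))
            \<le> integral {0..t} (\<lambda>s. ((3 * L + 1) * c) * s^m)"
          by (rule integral_norm_bound_integral[OF has_integral_integrable[OF I2] pow_integrable[OF t0]])
            (use pw in \<open>simp add: mult.assoc\<close>)
        then show ?thesis using integral_unique[OF I2] pow_integral[OF t0] by simp
      qed
      have "f (Suc k) t x \<le> c * t^(Suc m) / Suc m + (3 * L + 1) * c * t^(Suc m) / Suc m"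
        unfolding f_def using nA nB by simp
      also have "\<dots> = (2 + 3 * L) * c * t^(Suc m) / Suc m"
      proof -
        have "c * t^(Suc m) + (3 * L + 1) * c * t^(Suc m) = (2 + 3 * L) * c * t^(Suc m)"
          by (simp add: algebra_simps)
        then show ?thesis unfolding add_divide_distrib[symmetric] by simp
      qed
      finally show "f (Suc k) t x \<le> (2 + 3 * L) * c * t^(Suc m) / Suc m" .
    qed
  qed
  have "f 0 t x \<le> 0"
  proof (rule LIMSEQ_le_const[OF exp_series_zero[of "2 * B + 2 * M" "(2 + 3 * L) * t"]])
    show "\<exists>N. \<forall>n\<ge>N. f 0 t x \<le> (2 * B + 2 * M) * ((2 + 3 * L) * t)^n / fact n"
      using G t x unfolding f_def by auto
  qed
  then show ?thesis unfolding f_def by (smt (verit) norm_ge_zero norm_eq_zero eq_iff_diff_eq_0)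
qed

lemma uniqueness:
  assumes S1: "is_solution_L \<tau> \<Omega> \<rho> \<psi> \<eta>h vh \<eta>1 v1" and S2: "is_solution_L \<tau> \<Omega> \<rho> \<psi> \<eta>h vh \<eta>2 v2"
  shows "\<forall>t\<ge>-\<tau>. \<forall>x\<in>closure \<Omega>. \<eta>1 t x = \<eta>2 t x \<and> v1 t x = v2 t x"
proof (intro allI impI ballI)
  fix t x assume t: "t \<ge> -\<tau>" and x: "x \<in> closure \<Omega>"
  show "\<eta>1 t x = \<eta>2 t x \<and> v1 t x = v2 t x"
  proof (cases "t \<le> 0")
    case True
    then show ?thesis using S1 S2 t x unfolding is_solution_L_def by auto
  next
    case False
    then have tT: "t \<ge> 0" "t \<in> {-\<tau>..t}" using t by auto
    note c1 = sol_cont[OF S1 tT(1)] and c2 = sol_cont[OF S2 tT(1)]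
    have e1: "norm (\<eta>1 t x - \<eta>2 t x) \<le> 0"
    proof (rule closure_norm_bound[OF _ _ x])
      show "continuous_on (closure \<Omega>) (\<lambda>x. \<eta>1 t x - \<eta>2 t x)"
        by (intro continuous_intros slice_cont[OF c1(1) tT(2) order_refl] slice_cont[OF c2(1) tT(2) order_refl])
      show "norm (\<eta>1 t y - \<eta>2 t y) \<le> 0" if "y \<in> \<Omega>" for y using uniq_T[OF S1 S2 tT(1) _ that, of t] tT by simp
    qed
    have e2: "norm (v1 t x - v2 t x) \<le> 0"
    proof (rule closure_norm_bound[OF _ _ x])
      show "continuous_on (closure \<Omega>) (\<lambda>x. v1 t x - v2 t x)"
        by (intro continuous_intros slice_cont[OF c1(2) tT(2) order_refl] slice_cont[OF c2(2) tT(2) order_refl])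
      show "norm (v1 t y - v2 t y) \<le> 0" if "y \<in> \<Omega>" for y using uniq_T[OF S1 S2 tT(1) _ that, of t] tT by simp
    qed
    show ?thesis using e1 e2 by simp
  qed
qed

end

theorem theorem2p1:
  fixes \<tau> :: real and \<Omega>0 :: "'a::euclidean_space set" and \<rho>0 :: "'a \<Rightarrow> real"
    and \<psi> :: "'a \<Rightarrow> real" and \<psi>t :: "real \<Rightarrow> real"
    and \<eta>h vh :: "real \<Rightarrow> 'a \<Rightarrow> 'a"
  assumes tau: "\<tau> > 0"
    and Omega: "bounded \<Omega>0" "open \<Omega>0"
    and rho_nonneg: "\<forall>x\<in>\<Omega>0. \<rho>0 x \<ge> 0"
    and rho_int: "\<rho>0 integrable_on \<Omega>0"
    and rho_mass: "integral \<Omega>0 \<rho>0 = 1"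
    and psi: "assumption_A1 \<psi> \<psi>t"
    and hist_eta: "continuous_on ({-\<tau>..0} \<times> closure \<Omega>0) (\<lambda>(s, x). \<eta>h s x)"
    and hist_v: "continuous_on ({-\<tau>..0} \<times> closure \<Omega>0) (\<lambda>(s, x). vh s x)"
    and hist_0: "\<forall>x\<in>\<Omega>0. \<eta>h 0 x = x"
  shows "(\<exists>\<eta> v. is_solution_L \<tau> \<Omega>0 \<rho>0 \<psi> \<eta>h vh \<eta> v \<and>
            (\<forall>t\<ge>0. \<forall>x\<in>\<Omega>0.
               norm (v t x) \<le> (SUP p\<in>{-\<tau>..0} \<times> \<Omega>0. norm (vh (fst p) (snd p))))) \<and>
         (\<forall>\<eta>1 v1 \<eta>2 v2. is_solution_L \<tau> \<Omega>0 \<rho>0 \<psi> \<eta>h vh \<eta>1 v1 \<and>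
            is_solution_L \<tau> \<Omega>0 \<rho>0 \<psi> \<eta>h vh \<eta>2 v2 \<longrightarrow>
            (\<forall>t\<ge>-\<tau>. \<forall>x\<in>closure \<Omega>0. \<eta>1 t x = \<eta>2 t x \<and> v1 t x = v2 t x))"
proof -
  interpret hsetting \<Omega>0 \<rho>0 \<psi> \<psi>t \<tau> \<eta>h vh
    by unfold_locales (use tau Omega rho_nonneg rho_int rho_mass psi hist_eta hist_v in auto)
  show ?thesis using existence uniqueness unfolding Mv_def by blast
qed

end
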